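(* Consider the censored delayed-feedback bandit model with threshold $m\ge 1$ (described in the context), with conversion rates $\theta=(\theta_1,\dots,\theta_K)\in(0,1)^K$ such that arm $1$ is the unique optimal arm ($\theta^*:=\theta_1>\theta_k$ for all $k\neq 1$), and with a delay distribution whose CDF satisfies $\tau_m>0$. Then every uniformly efficient algorithm satisfies \[ \liminf_{T\to\infty}\frac{L(T)}{\log T}\;\ge\;\sum_{k\neq 1}\frac{\tau_m(\theta^*-\theta_k)}{d(\tau_m\theta_k,\tau_m\theta^* )} . \]
   Context: Delayed-feedback bandit model: there are $K$ arms with unknown conversion rates $\theta_1,\dots,\theta_K\in[0,1]$, and a known delay distribution on $\mathbb{N}=\{0,1,2,\dots\}$ with CDF $\tau_d=\mathbb{P}(D\le d)$, $d\ge 0$. At each round $t=1,2,\dots$ the learner chooses an arm $A_t\in\{1,\dots,K\}$ as a function of the observations available before round $t$. This triggers $C_t\in\{0,1\}$ and $D_t\in\mathbb{N}$ which, conditionally on the past, are independent, with $C_t\sim\mathrm{Bernoulli}(\theta_{A_t})$ and $D_t$ distributed with CDF $\tau$. For $s\le t$ let $X_{s,t}=C_s\mathbf{1}\{D_s\le t-s\}$. In the censored model with threshold $m$, at round $t$ the learner observes $X_{s,t}$ only for $t-m\le s\le t$, and receives reward $Y_t=\sum_{s=t-m}^{t}C_s\mathbf{1}\{D_s=t-s\}$. The expected regret is $L(T)=\mathbb{E}[r^*(T)-r(T)]$ where $r(T)=\sum_{t=1}^T Y_t$ and $r^*(T)$ is the cumulated reward of an oracle playing the optimal arm at every round. An algorithm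 is uniformly efficient if for every bandit model (every parameter vector $\theta$) and every $\alpha\in(0,1)$, $L(T)/T^\alpha\to 0$ as $T\to\infty$. $d(p,q)=p\log(p/q)+(1-p)\log((1-p)/(1-q))$ denotes the Bernoulli Kullback–Leibler divergence. *)

theory Defs
  imports "HOL-Probability.Probability"
begin

text \<open>Censored delayed-feedback Bernoulli bandit. Arms are 1..K, rounds are 1,2,...
  A hidden trajectory of length n is the list of triples (A_s, C_s, D_s), s = 1..n
  (stored at list index s-1).\<close>

type_synonym trajectory = "(nat \<times> bool \<times> nat) list"

text \<open>Learner's view: for each past round t, its own action A_t and the observations
  X_{s,t} for max 1 (t-m) <= s <= t (in increasing order of s).\<close>
type_synonym history = "(nat \<times> bool list) list"

type_synonym policy = "history \<Rightarrow> nat pmf"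

definition tau :: "nat pmf \<Rightarrow> nat \<Rightarrow> real" where
  "tau \<delta> d = measure_pmf.prob \<delta> {..d}"

definition conv :: "trajectory \<Rightarrow> nat \<Rightarrow> bool" where
  "conv tr s = fst (snd (tr ! (s - 1)))"

definition delay :: "trajectory \<Rightarrow> nat \<Rightarrow> nat" where
  "delay tr s = snd (snd (tr ! (s - 1)))"

definition arm :: "trajectory \<Rightarrow> nat \<Rightarrow> nat" where
  "arm tr s = fst (tr ! (s - 1))"

definition Xobs :: "trajectory \<Rightarrow> nat \<Rightarrow> nat \<Rightarrow> bool" where
  "Xobs tr s t = (conv tr s \<and> delay tr s \<le> t - s)"

definition obs_round :: "nat \<Rightarrow> trajectory \<Rightarrow> nat \<Rightarrow> bool list" where
  "obs_round m tr t = map (\<lambda>s. Xobs tr s t) [max 1 (t - m) ..< Suc t]"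

definition view :: "nat \<Rightarrow> trajectory \<Rightarrow> history" where
  "view m tr = map (\<lambda>t. (arm tr t, obs_round m tr t)) [1 ..< Suc (length tr)]"

fun traj :: "nat \<Rightarrow> policy \<Rightarrow> (nat \<Rightarrow> real) \<Rightarrow> nat pmf \<Rightarrow> nat \<Rightarrow> trajectory pmf" where
  "traj m \<pi> \<theta> \<delta> 0 = return_pmf []"
| "traj m \<pi> \<theta> \<delta> (Suc n) =
     bind_pmf (traj m \<pi> \<theta> \<delta> n) (\<lambda>tr.
     bind_pmf (\<pi> (view m tr)) (\<lambda>a.
     bind_pmf (bernoulli_pmf (\<theta> a)) (\<lambda>c.
     bind_pmf \<delta> (\<lambda>d. return_pmf (tr @ [(a, c, d)])))))"

definition reward_round :: "nat \<Rightarrow> trajectory \<Rightarrow> nat \<Rightarrow> nat" where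
  "reward_round m tr t = card {s \<in> {max 1 (t - m) .. t}. conv tr s \<and> delay tr s = t - s}"

definition cum_reward :: "nat \<Rightarrow> trajectory \<Rightarrow> nat \<Rightarrow> nat" where
  "cum_reward m tr T = (\<Sum>t\<in>{1..T}. reward_round m tr t)"

definition expected_reward :: "nat \<Rightarrow> policy \<Rightarrow> (nat \<Rightarrow> real) \<Rightarrow> nat pmf \<Rightarrow> nat \<Rightarrow> real" where
  "expected_reward m \<pi> \<theta> \<delta> T =
     measure_pmf.expectation (traj m \<pi> \<theta> \<delta> T) (\<lambda>tr. real (cum_reward m tr T))"

definition opt_arm :: "nat \<Rightarrow> (nat \<Rightarrow> real) \<Rightarrow> nat" where
  "opt_arm K \<theta> = (SOME k. k \<in> {1..K} \<and> (\<forall>j\<in>{1..K}. \<theta> j \<le> \<theta> k))"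

definition regret :: "nat \<Rightarrow> nat \<Rightarrow> policy \<Rightarrow> (nat \<Rightarrow> real) \<Rightarrow> nat pmf \<Rightarrow> nat \<Rightarrow> real" where
  "regret K m \<pi> \<theta> \<delta> T =
     expected_reward m (\<lambda>_. return_pmf (opt_arm K \<theta>)) \<theta> \<delta> T - expected_reward m \<pi> \<theta> \<delta> T"

definition valid_policy :: "nat \<Rightarrow> policy \<Rightarrow> bool" where
  "valid_policy K \<pi> = (\<forall>h. set_pmf (\<pi> h) \<subseteq> {1..K})"

definition uniformly_efficient :: "nat \<Rightarrow> nat \<Rightarrow> nat pmf \<Rightarrow> policy \<Rightarrow> bool" where
  "uniformly_efficient K m \<delta> \<pi> =
     (\<forall>\<theta>::nat \<Rightarrow> real. (\<forall>k\<in>{1..K}. 0 \<le> \<theta> k \<and> \<theta> k \<le> 1) \<longrightarrow>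
        (\<forall>\<alpha>::real. 0 < \<alpha> \<and> \<alpha> < 1 \<longrightarrow>
           (\<lambda>T. regret K m \<pi> \<theta> \<delta> T / real T powr \<alpha>) \<longlonglongrightarrow> 0))"

definition kl_bern :: "real \<Rightarrow> real \<Rightarrow> real" where
  "kl_bern p q = p * ln (p / q) + (1 - p) * ln ((1 - p) / (1 - q))"

end

theory Submission
  imports Defs
begin


lemma integral_bind_pmf_bdd:
  fixes f :: "'b \<Rightarrow> real"
  assumes "\<And>x. \<bar>f x\<bar> \<le> B"
  shows "measure_pmf.expectation (bind_pmf M N) f = measure_pmf.expectation M (\<lambda>x. measure_pmf.expectation (N x) f)"
  using measurable_measure_pmf[of N]
  unfolding measure_pmf_bind
  apply (intro integral_bind[where K="count_space UNIV" and B=B and B'=1])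
  using assms by auto

definition zf :: "nat \<Rightarrow> bool \<Rightarrow> nat \<Rightarrow> nat" where
  "zf m c d = (if c then min d (Suc m) else Suc m)"

definition gH :: "nat \<Rightarrow> trajectory \<Rightarrow> (nat \<times> nat) list" where
  "gH m tr = map (\<lambda>(a,c,d). (a, zf m c d)) tr"

definition viewH :: "nat \<Rightarrow> (nat \<times> nat) list \<Rightarrow> history" where
  "viewH m h = map (\<lambda>t. (fst (h!(t-1)), map (\<lambda>s. snd (h!(s-1)) \<le> t - s) [max 1 (t-m)..<Suc t])) [1..<Suc (length h)]"

definition rho :: "nat \<Rightarrow> nat pmf \<Rightarrow> real \<Rightarrow> nat \<Rightarrow> real" where
  "rho m \<delta> x z = (if z \<le> m then x * pmf \<delta> z else if z = Suc m then 1 - x * tau \<delta> m else 0)"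

definition Pn :: "nat \<Rightarrow> policy \<Rightarrow> (nat \<Rightarrow> real) \<Rightarrow> nat pmf \<Rightarrow> (nat \<times> nat) list \<Rightarrow> real" where
  "Pn m \<pi> \<theta> \<delta> h = (\<Prod>s<length h. pmf (\<pi> (viewH m (take s h))) (fst (h!s)) * rho m \<delta> (\<theta> (fst (h!s))) (snd (h!s)))"

definition Sn :: "nat \<Rightarrow> nat \<Rightarrow> nat \<Rightarrow> (nat \<times> nat) list set" where
  "Sn K m n = {h. length h = n \<and> set h \<subseteq> {1..K} \<times> {0..Suc m}}"

lemma view_eq: "view m tr = viewH m (gH m tr)"
  unfolding view_def viewH_def gH_def length_map
proof (intro map_cong refl)
  fix t assume t: "t \<in> set [1..<Suc (length tr)]"
  obtain a c d where e: "tr ! (t-1) = (a,c,d)" by (metis prod_cases3)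
  have tl: "t - 1 < length tr" using t by auto
  have 1: "arm tr t = fst (map (\<lambda>(a, c, d). (a, zf m c d)) tr ! (t - 1))"
    using tl e by (simp add: arm_def)
  have 2: "obs_round m tr t = map (\<lambda>s. snd (map (\<lambda>(a, c, d). (a, zf m c d)) tr ! (s - 1)) \<le> t - s)
             [max 1 (t - m)..<Suc t]"
    unfolding obs_round_def
  proof (intro map_cong refl)
    fix s assume s: "s \<in> set [max 1 (t - m)..<Suc t]"
    obtain a' c' d' where e': "tr ! (s-1) = (a',c',d')" by (metis prod_cases3)
    have "s - 1 < length tr" using s t by auto
    moreover have "t - s \<le> m" using s by auto
    ultimately show "Xobs tr s t = (snd (map (\<lambda>(a, c, d). (a, zf m c d)) tr ! (s - 1)) \<le> t - s)"
      using e' by (auto simp: Xobs_def conv_def delay_def zf_def)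
  qed
  show "(arm tr t, obs_round m tr t) =
         (fst (map (\<lambda>(a, c, d). (a, zf m c d)) tr ! (t - 1)),
          map (\<lambda>s. snd (map (\<lambda>(a, c, d). (a, zf m c d)) tr ! (s - 1)) \<le> t - s)
           [max 1 (t - m)..<Suc t])" using 1 2 by simp
qed

lemma finite_Sn: "finite (Sn K m n)"
proof -
  have "Sn K m n \<subseteq> {xs. set xs \<subseteq> {1..K} \<times> {0..Suc m} \<and> length xs = n}"
    unfolding Sn_def by auto
  thus ?thesis by (rule finite_subset) (intro finite_lists_length_eq, auto)
qed

lemma Sn_Suc: "Sn K m (Suc n) = (\<lambda>(h,x). h @ [x]) ` (Sn K m n \<times> ({1..K} \<times> {0..Suc m}))"
proof
  show "Sn K m (Suc n) \<subseteq> (\<lambda>(h,x). h @ [x]) ` (Sn K m n \<times> ({1..K} \<times> {0..Suc m}))"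
  proof
    fix h' assume h': "h' \<in> Sn K m (Suc n)"
    then obtain h x where hx: "h' = h @ [x]"
      unfolding Sn_def by (metis (mono_tags) length_Suc_conv_rev mem_Collect_eq rev.simps(2) rev_rev_ident)
    thus "h' \<in> (\<lambda>(h,x). h @ [x]) ` (Sn K m n \<times> ({1..K} \<times> {0..Suc m}))"
      using h' unfolding Sn_def by (auto intro!: image_eqI[of _ _ "(h,x)"])
  qed
qed (auto simp: Sn_def)

lemma sum_Sn_Suc:
  "(\<Sum>h'\<in>Sn K m (Suc n). F h') = (\<Sum>h\<in>Sn K m n. \<Sum>a\<in>{1..K}. \<Sum>z\<in>{0..Suc m}. F (h @ [(a,z)]))"
proof -
  have inj: "inj_on (\<lambda>(h,x). h @ [x]) (Sn K m n \<times> ({1..K} \<times> {0..Suc m}))"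
    by (auto simp: inj_on_def)
  have "(\<Sum>h'\<in>Sn K m (Suc n). F h') = (\<Sum>p\<in>Sn K m n \<times> ({1..K} \<times> {0..Suc m}). F ((\<lambda>(h,x). h @ [x]) p))"
    unfolding Sn_Suc by (subst sum.reindex[OF inj]) (simp add: comp_def)
  also have "\<dots> = (\<Sum>h\<in>Sn K m n. \<Sum>x\<in>{1..K} \<times> {0..Suc m}. F (h @ [x]))"
    by (subst sum.cartesian_product) (simp add: split_def)
  also have "\<dots> = (\<Sum>h\<in>Sn K m n. \<Sum>a\<in>{1..K}. \<Sum>z\<in>{0..Suc m}. F (h @ [(a,z)]))"
    by (intro sum.cong refl) (simp only: sum.cartesian_product split_def prod.collapse)
  finally show ?thesis .
qed

lemma Pn_Nil[simp]: "Pn m \<pi> \<theta> \<delta> [] = 1"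
  by (simp add: Pn_def)

lemma Pn_snoc: "Pn m \<pi> \<theta> \<delta> (h @ [(a,z)]) = Pn m \<pi> \<theta> \<delta> h * (pmf (\<pi> (viewH m h)) a * rho m \<delta> (\<theta> a) z)"
proof -
  have "Pn m \<pi> \<theta> \<delta> (h @ [(a,z)]) = (\<Prod>s<Suc (length h). pmf (\<pi> (viewH m (take s (h @ [(a,z)])))) (fst ((h @ [(a,z)])!s)) * rho m \<delta> (\<theta> (fst ((h @ [(a,z)])!s))) (snd ((h @ [(a,z)])!s)))"
    by (simp add: Pn_def)
  also have "\<dots> = (\<Prod>s<length h. pmf (\<pi> (viewH m (take s (h @ [(a,z)])))) (fst ((h @ [(a,z)])!s)) * rho m \<delta> (\<theta> (fst ((h @ [(a,z)])!s))) (snd ((h @ [(a,z)])!s))) * (pmf (\<pi> (viewH m h)) a * rho m \<delta> (\<theta> a) z)"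
    by (simp add: prod.lessThan_Suc)
  also have "(\<Prod>s<length h. pmf (\<pi> (viewH m (take s (h @ [(a,z)])))) (fst ((h @ [(a,z)])!s)) * rho m \<delta> (\<theta> (fst ((h @ [(a,z)])!s))) (snd ((h @ [(a,z)])!s))) = Pn m \<pi> \<theta> \<delta> h"
    unfolding Pn_def by (intro prod.cong refl) (simp add: nth_append)
  finally show ?thesis .
qed

lemma gH_snoc: "gH m (tr @ [(a,c,d)]) = gH m tr @ [(a, zf m c d)]"
  by (simp add: gH_def)

lemma length_gH[simp]: "length (gH m tr) = length tr"
  by (simp add: gH_def)

lemma expect_delta:
  fixes \<phi> :: "nat \<Rightarrow> real"
  shows "measure_pmf.expectation \<delta> (\<lambda>d. \<phi> (min d (Suc m))) =
     (\<Sum>z\<in>{0..m}. pmf \<delta> z * \<phi> z) + (1 - tau \<delta> m) * \<phi> (Suc m)"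
proof -
  have "measure_pmf.expectation \<delta> (\<lambda>d. \<phi> (min d (Suc m))) = measure_pmf.expectation (map_pmf (\<lambda>d. min d (Suc m)) \<delta>) \<phi>"
    by simp
  also have "\<dots> = (\<Sum>z\<in>{0..Suc m}. \<phi> z * pmf (map_pmf (\<lambda>d. min d (Suc m)) \<delta>) z)"
    by (rule integral_measure_pmf_real) auto
  also have "\<dots> = (\<Sum>z\<in>{0..m}. \<phi> z * pmf (map_pmf (\<lambda>d. min d (Suc m)) \<delta>) z) + \<phi> (Suc m) * pmf (map_pmf (\<lambda>d. min d (Suc m)) \<delta>) (Suc m)"
    by (simp add: sum.atLeast0_atMost_Suc)
  also have "(\<Sum>z\<in>{0..m}. \<phi> z * pmf (map_pmf (\<lambda>d. min d (Suc m)) \<delta>) z) = (\<Sum>z\<in>{0..m}. pmf \<delta> z * \<phi> z)"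
  proof (intro sum.cong refl)
    fix z assume z: "z \<in> {0..m}"
    have "(\<lambda>d. min d (Suc m)) -` {z} = {z}" using z by auto
    thus "\<phi> z * pmf (map_pmf (\<lambda>d. min d (Suc m)) \<delta>) z = pmf \<delta> z * \<phi> z"
      by (simp add: pmf_map measure_pmf_single)
  qed
  also have "pmf (map_pmf (\<lambda>d. min d (Suc m)) \<delta>) (Suc m) = 1 - tau \<delta> m"
  proof -
    have "(\<lambda>d. min d (Suc m)) -` {Suc m} = UNIV - {..m}" by auto
    thus ?thesis using measure_pmf.prob_compl[of "{..m}" \<delta>] by (simp add: pmf_map tau_def)
  qed
  finally show ?thesis by simp
qed

lemma expect_cd:
  fixes \<phi> :: "nat \<Rightarrow> real"
  assumes "0 \<le> x" "x \<le> 1"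
  shows "measure_pmf.expectation (bernoulli_pmf x) (\<lambda>c. measure_pmf.expectation \<delta> (\<lambda>d. \<phi> (zf m c d)))
     = (\<Sum>z\<in>{0..Suc m}. rho m \<delta> x z * \<phi> z)"
proof -
  have "(\<Sum>z\<in>{0..Suc m}. rho m \<delta> x z * \<phi> z) = (\<Sum>z\<in>{0..m}. rho m \<delta> x z * \<phi> z) + rho m \<delta> x (Suc m) * \<phi> (Suc m)"
    by (simp add: sum.atLeast0_atMost_Suc)
  also have "(\<Sum>z\<in>{0..m}. rho m \<delta> x z * \<phi> z) = x * (\<Sum>z\<in>{0..m}. pmf \<delta> z * \<phi> z)"
    by (simp add: rho_def sum_distrib_left mult.assoc)
  finally have r: "(\<Sum>z\<in>{0..Suc m}. rho m \<delta> x z * \<phi> z) = x * (\<Sum>z\<in>{0..m}. pmf \<delta> z * \<phi> z) + (1 - x * tau \<delta> m) * \<phi> (Suc m)"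
    by (simp add: rho_def)
  show ?thesis unfolding r using assms
    by (simp add: zf_def expect_delta algebra_simps)
qed

lemma expect_policy:
  fixes \<psi> :: "nat \<Rightarrow> real"
  assumes "valid_policy K \<pi>"
  shows "measure_pmf.expectation (\<pi> v) \<psi> = (\<Sum>a\<in>{1..K}. pmf (\<pi> v) a * \<psi> a)"
proof -
  have "\<forall>a\<in>set_pmf (\<pi> v). a \<in> {1..K}" using assms unfolding valid_policy_def by blast
  then show ?thesis by (subst integral_measure_pmf_real[of "{1..K}"]) (auto simp: mult.commute)
qed

lemma rho_bounds:
  assumes "0 \<le> x" "x \<le> 1"
  shows "0 \<le> rho m \<delta> x z" "rho m \<delta> x z \<le> 1"
proof -
  have t: "0 \<le> tau \<delta> m" "tau \<delta> m \<le> 1" by (auto simp: tau_def)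
  have p: "pmf \<delta> z \<le> 1" by (rule pmf_le_1)
  show "0 \<le> rho m \<delta> x z" using assms t by (auto simp: rho_def mult_le_one)
  show "rho m \<delta> x z \<le> 1" using assms t p by (auto simp: rho_def mult_le_one)
qed


lemma Sn_0: "Sn K m 0 = {[]}"
  by (auto simp: Sn_def)

lemma traj_expect:
  assumes vp: "valid_policy K \<pi>" and th: "\<forall>k\<in>{1..K}. 0 \<le> \<theta> k \<and> \<theta> k \<le> 1"
  shows "(\<And>h. \<bar>F h\<bar> \<le> B) \<Longrightarrow> measure_pmf.expectation (traj m \<pi> \<theta> \<delta> n) (\<lambda>tr. F (gH m tr))
          = (\<Sum>h\<in>Sn K m n. Pn m \<pi> \<theta> \<delta> h * F h)"
proof (induction n arbitrary: F B)
  case 0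
  then show ?case by (simp add: Sn_0 gH_def)
next
  case (Suc n)
  define G where "G h = (\<Sum>a\<in>{1..K}. pmf (\<pi> (viewH m h)) a * (\<Sum>z\<in>{0..Suc m}. rho m \<delta> (\<theta> a) z * F (h @ [(a,z)])))" for h
  have B0: "0 \<le> B" using Suc.prems[of "[]"] by linarith
  have bdG: "\<bar>G h\<bar> \<le> real K * (real (Suc (Suc m)) * B)" for h
  proof -
    have "\<bar>G h\<bar> \<le> (\<Sum>a\<in>{1..K}. \<bar>pmf (\<pi> (viewH m h)) a * (\<Sum>z\<in>{0..Suc m}. rho m \<delta> (\<theta> a) z * F (h @ [(a,z)]))\<bar>)"
      unfolding G_def by (rule sum_abs)
    also have "\<dots> \<le> (\<Sum>a\<in>{1..K}. real (Suc (Suc m)) * B)"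
    proof (intro sum_mono)
      fix a assume a: "a \<in> {1..K}"
      have "\<bar>(\<Sum>z\<in>{0..Suc m}. rho m \<delta> (\<theta> a) z * F (h @ [(a,z)]))\<bar> \<le> (\<Sum>z\<in>{0..Suc m}. \<bar>rho m \<delta> (\<theta> a) z * F (h @ [(a,z)])\<bar>)"
        by (rule sum_abs)
      also have "\<dots> \<le> (\<Sum>z\<in>{0..Suc m}. B)"
      proof (intro sum_mono)
        fix z
        have "0 \<le> rho m \<delta> (\<theta> a) z" "rho m \<delta> (\<theta> a) z \<le> 1" using rho_bounds th a by auto
        thus "\<bar>rho m \<delta> (\<theta> a) z * F (h @ [(a,z)])\<bar> \<le> B"
          using Suc.prems[of "h @ [(a,z)]"] mult_left_le_one_le[of "\<bar>F (h @ [(a,z)])\<bar>" "rho m \<delta> (\<theta> a) z"]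
          by (simp add: abs_mult)
      qed
      finally have 1: "\<bar>(\<Sum>z\<in>{0..Suc m}. rho m \<delta> (\<theta> a) z * F (h @ [(a,z)]))\<bar> \<le> real (Suc (Suc m)) * B" by simp
      have "0 \<le> pmf (\<pi> (viewH m h)) a" "pmf (\<pi> (viewH m h)) a \<le> 1" by (auto simp: pmf_le_1)
      then show "\<bar>pmf (\<pi> (viewH m h)) a * (\<Sum>z\<in>{0..Suc m}. rho m \<delta> (\<theta> a) z * F (h @ [(a,z)]))\<bar> \<le> real (Suc (Suc m)) * B"
        using 1 mult_left_le_one_le[of "\<bar>\<Sum>z\<in>{0..Suc m}. rho m \<delta> (\<theta> a) z * F (h @ [(a,z)])\<bar>" "pmf (\<pi> (viewH m h)) a"]
        by (simp add: abs_mult)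
    qed
    also have "\<dots> = real K * (real (Suc (Suc m)) * B)" by simp
    finally show ?thesis .
  qed
  have inner: "measure_pmf.expectation (\<pi> (view m tr) \<bind> (\<lambda>a. bernoulli_pmf (\<theta> a) \<bind> (\<lambda>c. \<delta> \<bind> (\<lambda>d. return_pmf (tr @ [(a, c, d)]))))) (\<lambda>tr. F (gH m tr)) = G (gH m tr)" for tr
  proof -
    have "measure_pmf.expectation (\<pi> (view m tr) \<bind> (\<lambda>a. bernoulli_pmf (\<theta> a) \<bind> (\<lambda>c. \<delta> \<bind> (\<lambda>d. return_pmf (tr @ [(a, c, d)]))))) (\<lambda>tr. F (gH m tr))
       = measure_pmf.expectation (\<pi> (view m tr)) (\<lambda>a. measure_pmf.expectation (bernoulli_pmf (\<theta> a)) (\<lambda>c. measure_pmf.expectation \<delta> (\<lambda>d. F (gH m tr @ [(a, zf m c d)]))))"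
      by (simp add: integral_bind_pmf_bdd[where B=B, OF Suc.prems] gH_snoc)
    also have "\<dots> = (\<Sum>a\<in>{1..K}. pmf (\<pi> (view m tr)) a * measure_pmf.expectation (bernoulli_pmf (\<theta> a)) (\<lambda>c. measure_pmf.expectation \<delta> (\<lambda>d. F (gH m tr @ [(a, zf m c d)]))))"
      by (rule expect_policy[OF vp])
    also have "\<dots> = G (gH m tr)"
      unfolding G_def view_eq
    proof (intro sum.cong refl)
      fix a assume a: "a \<in> {1..K}"
      show "pmf (\<pi> (viewH m (gH m tr))) a * measure_pmf.expectation (bernoulli_pmf (\<theta> a)) (\<lambda>c. measure_pmf.expectation \<delta> (\<lambda>d. F (gH m tr @ [(a, zf m c d)]))) =
          pmf (\<pi> (viewH m (gH m tr))) a * (\<Sum>z\<in>{0..Suc m}. rho m \<delta> (\<theta> a) z * F (gH m tr @ [(a, z)]))"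
        using expect_cd[where x="\<theta> a" and \<phi>="\<lambda>z. F (gH m tr @ [(a, z)])" and \<delta>=\<delta> and m=m] th a by simp
    qed
    finally show ?thesis .
  qed
  have "measure_pmf.expectation (traj m \<pi> \<theta> \<delta> (Suc n)) (\<lambda>tr. F (gH m tr))
      = measure_pmf.expectation (traj m \<pi> \<theta> \<delta> n) (\<lambda>tr. G (gH m tr))"
    by (simp only: traj.simps, subst integral_bind_pmf_bdd[where B=B, OF Suc.prems], simp only: inner)
  also have "\<dots> = (\<Sum>h\<in>Sn K m n. Pn m \<pi> \<theta> \<delta> h * G h)"
    by (rule Suc.IH[OF bdG])
  also have "\<dots> = (\<Sum>h\<in>Sn K m (Suc n). Pn m \<pi> \<theta> \<delta> h * F h)"
    unfolding sum_Sn_Suc Pn_snoc G_def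
    by (simp only: sum_distrib_left mult.assoc)
  finally show ?case .
qed


lemma traj_length: "tr \<in> set_pmf (traj m \<pi> \<theta> \<delta> n) \<Longrightarrow> length tr = n"
proof (induction n arbitrary: tr)
  case 0 thus ?case by simp
next
  case (Suc n)
  from Suc.prems obtain tr0 where "tr0 \<in> set_pmf (traj m \<pi> \<theta> \<delta> n)" "tr \<in> set_pmf (\<pi> (view m tr0) \<bind> (\<lambda>a. bernoulli_pmf (\<theta> a) \<bind> (\<lambda>c. \<delta> \<bind> (\<lambda>d. return_pmf (tr0 @ [(a, c, d)])))))"
    by (simp only: traj.simps set_bind_pmf) blast
  thus ?case using Suc.IH by (simp only: set_bind_pmf set_return_pmf) auto
qed

definition CR :: "nat \<Rightarrow> nat \<Rightarrow> (nat \<times> nat) list \<Rightarrow> real" where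
  "CR m T h = (\<Sum>s<T. if snd (h!s) \<le> min m (T - Suc s) then 1 else 0)"

lemma card_as_sum: "finite A \<Longrightarrow> real (card {x\<in>A. P x}) = (\<Sum>x\<in>A. if P x then 1 else 0)"
  by (simp add: sum.inter_filter[symmetric])

lemma cum_reward_eq:
  "real (cum_reward m tr T) = (\<Sum>s<T. if conv tr (Suc s) \<and> delay tr (Suc s) \<le> min m (T - Suc s) then 1 else 0)"
proof -
  let ?Q = "\<lambda>s t. s \<in> {max 1 (t - m)..t} \<and> conv tr s \<and> delay tr s = t - s"
  have "real (cum_reward m tr T) = (\<Sum>t\<in>{1..T}. real (reward_round m tr t))"
    by (simp add: cum_reward_def)
  also have "\<dots> = (\<Sum>t\<in>{1..T}. \<Sum>s\<in>{1..T}. if ?Q s t then 1 else 0)"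
  proof (intro sum.cong refl)
    fix t assume t: "t \<in> {1..T}"
    have e: "{s \<in> {max 1 (t - m)..t}. conv tr s \<and> delay tr s = t - s} = {s \<in> {1..T}. ?Q s t}"
      using t by auto
    show "real (reward_round m tr t) = (\<Sum>s\<in>{1..T}. if ?Q s t then 1 else 0)"
      unfolding reward_round_def e by (rule card_as_sum) simp
  qed
  also have "\<dots> = (\<Sum>s\<in>{1..T}. \<Sum>t\<in>{1..T}. if ?Q s t then 1 else 0)"
    by (rule sum.swap)
  also have "\<dots> = (\<Sum>s\<in>{1..T}. if conv tr s \<and> delay tr s \<le> min m (T - s) then 1 else 0)"
  proof (intro sum.cong refl)
    fix s assume s: "s \<in> {1..T}"
    have "(\<lambda>t. if ?Q s t then 1 else (0::real)) = (\<lambda>t. if t = s + delay tr s then (if conv tr s \<and> delay tr s \<le> m then 1 else 0) else 0)"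
      using s by (intro ext) auto
    then have "(\<Sum>t\<in>{1..T}. if ?Q s t then 1 else (0::real)) = (\<Sum>t\<in>{1..T}. if t = s + delay tr s then (if conv tr s \<and> delay tr s \<le> m then 1 else 0) else 0)"
      by (rule arg_cong)
    also have "\<dots> = (if s + delay tr s \<in> {1..T} then (if conv tr s \<and> delay tr s \<le> m then 1 else 0) else 0)"
      by (rule sum.delta[OF finite_atLeastAtMost])
    also have "\<dots> = (if conv tr s \<and> delay tr s \<le> min m (T - s) then 1 else 0)"
      using s by auto
    finally show "(\<Sum>t\<in>{1..T}. if ?Q s t then 1 else (0::real)) = (if conv tr s \<and> delay tr s \<le> min m (T - s) then 1 else 0)" .
  qed
  also have "\<dots> = (\<Sum>s<T. if conv tr (Suc s) \<and> delay tr (Suc s) \<le> min m (T - Suc s) then 1 else 0)"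
    by (simp only: One_nat_def sum.atLeast1_atMost_eq)
  finally show ?thesis .
qed

lemma cum_reward_CR: "length tr = T \<Longrightarrow> real (cum_reward m tr T) = CR m T (gH m tr)"
  unfolding cum_reward_eq CR_def
proof (intro sum.cong refl)
  fix s assume "length tr = T" "s \<in> {..<T}"
  then have sl: "s < length tr" by simp
  obtain a c d where e: "tr ! s = (a,c,d)" by (metis prod_cases3)
  show "(if conv tr (Suc s) \<and> delay tr (Suc s) \<le> min m (T - Suc s) then 1 else (0::real)) =
        (if snd (gH m tr ! s) \<le> min m (T - Suc s) then 1 else 0)"
  proof -
    have g: "gH m tr ! s = (a, zf m c d)" using sl e by (simp add: gH_def)
    show ?thesis unfolding g using e by (cases c) (simp_all add: conv_def delay_def zf_def)
  qed
qed

lemma CR_bound: "\<bar>CR m T h\<bar> \<le> real T"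
proof -
  have "\<bar>CR m T h\<bar> \<le> (\<Sum>s<T. \<bar>if snd (h!s) \<le> min m (T - Suc s) then 1 else (0::real)\<bar>)"
    unfolding CR_def by (rule sum_abs)
  also have "\<dots> \<le> (\<Sum>s<T. 1)" by (intro sum_mono) simp
  finally show ?thesis by simp
qed

definition EH :: "nat \<Rightarrow> nat \<Rightarrow> policy \<Rightarrow> (nat \<Rightarrow> real) \<Rightarrow> nat pmf \<Rightarrow> nat \<Rightarrow> ((nat \<times> nat) list \<Rightarrow> real) \<Rightarrow> real" where
  "EH K m \<pi> \<theta> \<delta> n \<Phi> = (\<Sum>h\<in>Sn K m n. Pn m \<pi> \<theta> \<delta> h * \<Phi> h)"

lemma expected_reward_EH:
  assumes vp: "valid_policy K \<pi>" and th: "\<forall>k\<in>{1..K}. 0 \<le> \<theta> k \<and> \<theta> k \<le> 1"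
  shows "expected_reward m \<pi> \<theta> \<delta> T = EH K m \<pi> \<theta> \<delta> T (CR m T)"
proof -
  have "expected_reward m \<pi> \<theta> \<delta> T = measure_pmf.expectation (traj m \<pi> \<theta> \<delta> T) (\<lambda>tr. CR m T (gH m tr))"
    unfolding expected_reward_def
    apply (rule integral_cong_AE)
      apply simp
     apply simp
    apply (simp add: AE_measure_pmf_iff cum_reward_CR traj_length)
    done
  also have "\<dots> = EH K m \<pi> \<theta> \<delta> T (CR m T)"
    unfolding EH_def by (rule traj_expect[OF vp th CR_bound])
  finally show ?thesis .
qed

lemma tau_sum: "tau \<delta> c = (\<Sum>z\<in>{0..c}. pmf \<delta> z)"
  unfolding tau_def by (subst measure_measure_pmf_finite) (auto simp: atLeast0AtMost)

lemma sum_rho: "(\<Sum>z\<in>{0..Suc m}. rho m \<delta> x z) = 1"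
proof -
  have "(\<Sum>z\<in>{0..Suc m}. rho m \<delta> x z) = (\<Sum>z\<in>{0..m}. rho m \<delta> x z) + rho m \<delta> x (Suc m)"
    by (simp add: sum.atLeast0_atMost_Suc)
  also have "(\<Sum>z\<in>{0..m}. rho m \<delta> x z) = x * tau \<delta> m"
    by (simp add: rho_def tau_sum sum_distrib_left)
  finally show ?thesis by (simp add: rho_def)
qed

lemma sum_rho_le:
  assumes "c \<le> m"
  shows "(\<Sum>z\<in>{0..Suc m}. rho m \<delta> x z * (if z \<le> c then 1 else 0)) = x * tau \<delta> c"
proof -
  have "(\<Sum>z\<in>{0..Suc m}. rho m \<delta> x z * (if z \<le> c then 1 else 0)) = (\<Sum>z\<in>{0..Suc m}. if z \<in> {0..c} then rho m \<delta> x z else 0)"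
    by (intro sum.cong refl) auto
  also have "\<dots> = (\<Sum>z\<in>{0..c}. rho m \<delta> x z)"
    using assms by (subst sum.If_cases) (auto intro!: sum.cong)
  also have "\<dots> = x * tau \<delta> c"
    using assms by (simp add: rho_def tau_sum sum_distrib_left)
  finally show ?thesis .
qed

lemma sum_policy: "valid_policy K \<pi> \<Longrightarrow> (\<Sum>a\<in>{1..K}. pmf (\<pi> v) a) = 1"
  unfolding valid_policy_def by (intro sum_pmf_eq_1) auto

lemma pmf_policy_out: "valid_policy K \<pi> \<Longrightarrow> a \<notin> {1..K} \<Longrightarrow> pmf (\<pi> v) a = 0"
  unfolding valid_policy_def by (meson pmf_eq_0_set_pmf subsetD)

lemma EH_Suc: "EH K m \<pi> \<theta> \<delta> (Suc n) \<Phi> =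
   EH K m \<pi> \<theta> \<delta> n (\<lambda>h. \<Sum>a\<in>{1..K}. pmf (\<pi> (viewH m h)) a * (\<Sum>z\<in>{0..Suc m}. rho m \<delta> (\<theta> a) z * \<Phi> (h @ [(a,z)])))"
  unfolding EH_def sum_Sn_Suc Pn_snoc
  by (simp only: sum_distrib_left mult.assoc)

lemma EH_cong: "(\<And>h. h \<in> Sn K m n \<Longrightarrow> \<Phi> h = \<Psi> h) \<Longrightarrow> EH K m \<pi> \<theta> \<delta> n \<Phi> = EH K m \<pi> \<theta> \<delta> n \<Psi>"
  unfolding EH_def by (intro sum.cong refl) auto

lemma EH_add: "EH K m \<pi> \<theta> \<delta> n (\<lambda>h. \<Phi> h + \<Psi> h) = EH K m \<pi> \<theta> \<delta> n \<Phi> + EH K m \<pi> \<theta> \<delta> n \<Psi>"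
  unfolding EH_def distrib_left by (rule sum.distrib)

lemma EH_diff: "EH K m \<pi> \<theta> \<delta> n (\<lambda>h. \<Phi> h - \<Psi> h) = EH K m \<pi> \<theta> \<delta> n \<Phi> - EH K m \<pi> \<theta> \<delta> n \<Psi>"
  unfolding EH_def right_diff_distrib by (rule sum_subtractf)

lemma EH_cmult: "EH K m \<pi> \<theta> \<delta> n (\<lambda>h. c * \<Phi> h) = c * EH K m \<pi> \<theta> \<delta> n \<Phi>"
  unfolding EH_def sum_distrib_left by (intro sum.cong refl) (simp only: mult.left_commute)

lemma EH_sum: "EH K m \<pi> \<theta> \<delta> n (\<lambda>h. \<Sum>i\<in>I. \<Phi> i h) = (\<Sum>i\<in>I. EH K m \<pi> \<theta> \<delta> n (\<Phi> i))"
  unfolding EH_def sum_distrib_left by (rule sum.swap)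

lemma EH_one:
  assumes vp: "valid_policy K \<pi>"
  shows "EH K m \<pi> \<theta> \<delta> n (\<lambda>_. 1) = 1"
proof (induction n)
  case 0 thus ?case by (simp add: EH_def Sn_0)
next
  case (Suc n)
  have "EH K m \<pi> \<theta> \<delta> (Suc n) (\<lambda>_. 1) = EH K m \<pi> \<theta> \<delta> n (\<lambda>_. 1)"
    unfolding EH_Suc by (simp only: sum_rho mult_1_right sum_policy[OF vp])
  thus ?case using Suc by simp
qed

lemma EH_const: "valid_policy K \<pi> \<Longrightarrow> EH K m \<pi> \<theta> \<delta> n (\<lambda>_. c) = c"
  using EH_cmult[of K m \<pi> \<theta> \<delta> n c "\<lambda>_. 1"] EH_one[of K \<pi> m \<theta> \<delta> n] by simp

lemma Pn_nonneg:
  assumes th: "\<forall>k\<in>{1..K}. 0 \<le> \<theta> k \<and> \<theta> k \<le> 1" and h: "h \<in> Sn K m n"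
  shows "0 \<le> Pn m \<pi> \<theta> \<delta> h"
  unfolding Pn_def
proof (intro prod_nonneg mult_nonneg_nonneg)
  fix s assume "s \<in> {..<length h}"
  then have "h ! s \<in> set h" by simp
  then have "fst (h!s) \<in> {1..K}" using h unfolding Sn_def by auto
  then show "0 \<le> rho m \<delta> (\<theta> (fst (h ! s))) (snd (h ! s))" using rho_bounds th by auto
qed simp

lemma EH_mono:
  assumes th: "\<forall>k\<in>{1..K}. 0 \<le> \<theta> k \<and> \<theta> k \<le> 1"
  and "\<And>h. h \<in> Sn K m n \<Longrightarrow> \<Phi> h \<le> \<Psi> h"
  shows "EH K m \<pi> \<theta> \<delta> n \<Phi> \<le> EH K m \<pi> \<theta> \<delta> n \<Psi>"
  unfolding EH_def using assms Pn_nonneg[OF th]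
  by (intro sum_mono mult_left_mono) auto

lemma EH_additive:
  assumes vp: "valid_policy K \<pi>"
  shows "EH K m \<pi> \<theta> \<delta> n (\<lambda>h. \<Sum>s<n. f s (h!s)) =
     (\<Sum>s<n. EH K m \<pi> \<theta> \<delta> s (\<lambda>h. \<Sum>a\<in>{1..K}. pmf (\<pi> (viewH m h)) a * (\<Sum>z\<in>{0..Suc m}. rho m \<delta> (\<theta> a) z * f s (a,z))))"
proof (induction n)
  case 0 thus ?case by (simp add: EH_def Sn_0)
next
  case (Suc n)
  let ?I = "\<lambda>s h. \<Sum>a\<in>{1..K}. pmf (\<pi> (viewH m h)) a * (\<Sum>z\<in>{0..Suc m}. rho m \<delta> (\<theta> a) z * f s (a,z))"
  have "EH K m \<pi> \<theta> \<delta> (Suc n) (\<lambda>h. \<Sum>s<Suc n. f s (h!s)) =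
        EH K m \<pi> \<theta> \<delta> n (\<lambda>h. (\<Sum>s<n. f s (h!s)) + ?I n h)"
    unfolding EH_Suc
  proof (intro EH_cong)
    fix h assume h: "h \<in> Sn K m n"
    then have lh: "length h = n" by (simp add: Sn_def)
    have "(\<Sum>a\<in>{1..K}. pmf (\<pi> (viewH m h)) a * (\<Sum>z\<in>{0..Suc m}. rho m \<delta> (\<theta> a) z * (\<Sum>s<Suc n. f s ((h @ [(a, z)]) ! s))))
       = (\<Sum>a\<in>{1..K}. pmf (\<pi> (viewH m h)) a * (\<Sum>z\<in>{0..Suc m}. rho m \<delta> (\<theta> a) z * ((\<Sum>s<n. f s (h ! s)) + f n (a,z))))"
      using lh by (simp add: nth_append)
    also have "\<dots> = (\<Sum>a\<in>{1..K}. pmf (\<pi> (viewH m h)) a * ((\<Sum>z\<in>{0..Suc m}. rho m \<delta> (\<theta> a) z) * (\<Sum>s<n. f s (h ! s)) + (\<Sum>z\<in>{0..Suc m}. rho m \<delta> (\<theta> a) z * f n (a,z))))"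
      by (simp only: distrib_left sum.distrib sum_distrib_right)
    also have "\<dots> = (\<Sum>a\<in>{1..K}. pmf (\<pi> (viewH m h)) a * (\<Sum>s<n. f s (h ! s)) + pmf (\<pi> (viewH m h)) a * (\<Sum>z\<in>{0..Suc m}. rho m \<delta> (\<theta> a) z * f n (a,z)))"
      by (simp only: sum_rho mult_1_left distrib_left)
    also have "\<dots> = (\<Sum>a\<in>{1..K}. pmf (\<pi> (viewH m h)) a) * (\<Sum>s<n. f s (h ! s)) + ?I n h"
      by (simp only: sum.distrib sum_distrib_right)
    also have "\<dots> = (\<Sum>s<n. f s (h ! s)) + ?I n h"
      by (simp only: sum_policy[OF vp] mult_1_left)
    finally show "(\<Sum>a\<in>{1..K}. pmf (\<pi> (viewH m h)) a * (\<Sum>z\<in>{0..Suc m}. rho m \<delta> (\<theta> a) z * (\<Sum>s<Suc n. f s ((h @ [(a, z)]) ! s)))) = (\<Sum>s<n. f s (h ! s)) + ?I n h" .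
  qed
  also have "\<dots> = (\<Sum>s<Suc n. EH K m \<pi> \<theta> \<delta> s (?I s))"
    by (simp add: EH_add Suc.IH)
  finally show ?case .
qed


lemma CR_as_sum: "CR m T h = (\<Sum>s<T. (\<lambda>s (a,z). if z \<le> min m (T - Suc s) then 1 else (0::real)) s (h!s))"
  unfolding CR_def by (intro sum.cong refl) (simp add: split_def)

lemma ER_formula:
  assumes vp: "valid_policy K \<pi>" and th: "\<forall>k\<in>{1..K}. 0 \<le> \<theta> k \<and> \<theta> k \<le> 1"
  shows "expected_reward m \<pi> \<theta> \<delta> T =
     (\<Sum>s<T. EH K m \<pi> \<theta> \<delta> s (\<lambda>h. \<Sum>a\<in>{1..K}. pmf (\<pi> (viewH m h)) a * (\<theta> a * tau \<delta> (min m (T - Suc s)))))"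
proof -
  have "expected_reward m \<pi> \<theta> \<delta> T = EH K m \<pi> \<theta> \<delta> T (\<lambda>h. \<Sum>s<T. (\<lambda>s (a,z). if z \<le> min m (T - Suc s) then 1 else (0::real)) s (h!s))"
    unfolding expected_reward_EH[OF vp th] CR_as_sum ..
  also have "\<dots> = (\<Sum>s<T. EH K m \<pi> \<theta> \<delta> s (\<lambda>h. \<Sum>a\<in>{1..K}. pmf (\<pi> (viewH m h)) a * (\<Sum>z\<in>{0..Suc m}. rho m \<delta> (\<theta> a) z * (if z \<le> min m (T - Suc s) then 1 else 0))))"
    by (subst EH_additive[OF vp]) simp
  also have "\<dots> = (\<Sum>s<T. EH K m \<pi> \<theta> \<delta> s (\<lambda>h. \<Sum>a\<in>{1..K}. pmf (\<pi> (viewH m h)) a * (\<theta> a * tau \<delta> (min m (T - Suc s)))))"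
    by (simp only: sum_rho_le[OF min.cobounded1])
  finally show ?thesis .
qed

lemma valid_const: "ob \<in> {1..K} \<Longrightarrow> valid_policy K (\<lambda>_. return_pmf ob)"
  by (simp add: valid_policy_def)

lemma sum_return: "(ob::nat) \<in> {1..K} \<Longrightarrow> (\<Sum>a\<in>{1..K}. pmf (return_pmf ob) a * (g a :: real)) = g ob"
proof -
  assume ob: "ob \<in> {1..K}"
  have "(\<Sum>a\<in>{1..K}. pmf (return_pmf ob) a * g a) = (\<Sum>a\<in>{1..K}. if a = ob then g a else 0)"
    by (intro sum.cong refl) (simp add: pmf_return)
  also have "\<dots> = g ob" using ob by (subst sum.delta) auto
  finally show ?thesis .
qed

definition gapE :: "nat \<Rightarrow> nat \<Rightarrow> policy \<Rightarrow> (nat \<Rightarrow> real) \<Rightarrow> nat pmf \<Rightarrow> nat \<Rightarrow> nat \<Rightarrow> real" where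
  "gapE K m \<pi> \<theta> \<delta> ob s = EH K m \<pi> \<theta> \<delta> s (\<lambda>h. \<Sum>a\<in>{1..K}. pmf (\<pi> (viewH m h)) a * (\<theta> ob - \<theta> a))"

lemma regret_formula:
  assumes vp: "valid_policy K \<pi>" and th: "\<forall>k\<in>{1..K}. 0 \<le> \<theta> k \<and> \<theta> k \<le> 1"
    and ob: "opt_arm K \<theta> \<in> {1..K}"
  shows "regret K m \<pi> \<theta> \<delta> T = (\<Sum>s<T. tau \<delta> (min m (T - Suc s)) * gapE K m \<pi> \<theta> \<delta> (opt_arm K \<theta>) s)"
proof -
  let ?ob = "opt_arm K \<theta>"
  let ?c = "\<lambda>s. tau \<delta> (min m (T - Suc s))"
  have orc: "expected_reward m (\<lambda>_. return_pmf ?ob) \<theta> \<delta> T = (\<Sum>s<T. \<theta> ?ob * ?c s)"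
    unfolding ER_formula[OF valid_const[OF ob] th]
    by (simp only: sum_return[OF ob] EH_const[OF valid_const[OF ob]])
  have "(\<Sum>s<T. \<theta> ?ob * ?c s) = (\<Sum>s<T. EH K m \<pi> \<theta> \<delta> s (\<lambda>h. \<Sum>a\<in>{1..K}. pmf (\<pi> (viewH m h)) a * (\<theta> ?ob * ?c s)))"
    by (simp only: sum_distrib_right[symmetric] sum_policy[OF vp] mult_1_left EH_const[OF vp])
  then have "regret K m \<pi> \<theta> \<delta> T = (\<Sum>s<T. EH K m \<pi> \<theta> \<delta> s (\<lambda>h. \<Sum>a\<in>{1..K}. pmf (\<pi> (viewH m h)) a * (\<theta> ?ob * ?c s))
        - EH K m \<pi> \<theta> \<delta> s (\<lambda>h. \<Sum>a\<in>{1..K}. pmf (\<pi> (viewH m h)) a * (\<theta> a * ?c s)))"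
    unfolding regret_def orc ER_formula[OF vp th] by (simp only: sum_subtractf)
  also have "\<dots> = (\<Sum>s<T. ?c s * gapE K m \<pi> \<theta> \<delta> ?ob s)"
  proof (intro sum.cong refl)
    fix s
    have "EH K m \<pi> \<theta> \<delta> s (\<lambda>h. \<Sum>a\<in>{1..K}. pmf (\<pi> (viewH m h)) a * (\<theta> ?ob * ?c s))
        - EH K m \<pi> \<theta> \<delta> s (\<lambda>h. \<Sum>a\<in>{1..K}. pmf (\<pi> (viewH m h)) a * (\<theta> a * ?c s))
        = EH K m \<pi> \<theta> \<delta> s (\<lambda>h. ?c s * (\<Sum>a\<in>{1..K}. pmf (\<pi> (viewH m h)) a * (\<theta> ?ob - \<theta> a)))"
      unfolding EH_diff[symmetric]
      by (intro EH_cong) (simp add: sum_subtractf[symmetric] sum_distrib_left algebra_simps)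
    also have "\<dots> = ?c s * gapE K m \<pi> \<theta> \<delta> ?ob s"
      unfolding gapE_def by (rule EH_cmult)
    finally show "EH K m \<pi> \<theta> \<delta> s (\<lambda>h. \<Sum>a\<in>{1..K}. pmf (\<pi> (viewH m h)) a * (\<theta> ?ob * ?c s))
        - EH K m \<pi> \<theta> \<delta> s (\<lambda>h. \<Sum>a\<in>{1..K}. pmf (\<pi> (viewH m h)) a * (\<theta> a * ?c s)) = ?c s * gapE K m \<pi> \<theta> \<delta> ?ob s" .
  qed
  finally show ?thesis .
qed

definition wk :: "nat \<Rightarrow> nat \<Rightarrow> policy \<Rightarrow> (nat \<Rightarrow> real) \<Rightarrow> nat pmf \<Rightarrow> nat \<Rightarrow> nat \<Rightarrow> real" where
  "wk K m \<pi> \<theta> \<delta> k s = EH K m \<pi> \<theta> \<delta> s (\<lambda>h. pmf (\<pi> (viewH m h)) k)"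

lemma wk_bounds:
  assumes vp: "valid_policy K \<pi>" and th: "\<forall>k\<in>{1..K}. 0 \<le> \<theta> k \<and> \<theta> k \<le> 1"
  shows "0 \<le> wk K m \<pi> \<theta> \<delta> k s" "wk K m \<pi> \<theta> \<delta> k s \<le> 1"
proof -
  show "0 \<le> wk K m \<pi> \<theta> \<delta> k s"
    using EH_mono[OF th, of m s "\<lambda>_. 0" "\<lambda>h. pmf (\<pi> (viewH m h)) k" \<pi> \<delta>] EH_const[OF vp, of m \<theta> \<delta> s 0]
    unfolding wk_def by simp
  show "wk K m \<pi> \<theta> \<delta> k s \<le> 1"
    using EH_mono[OF th, of m s "\<lambda>h. pmf (\<pi> (viewH m h)) k" "\<lambda>_. 1" \<pi> \<delta>] EH_const[OF vp, of m \<theta> \<delta> s 1]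
    unfolding wk_def by (simp add: pmf_le_1)
qed

lemma gap_nonneg:
  assumes th: "\<forall>k\<in>{1..K}. 0 \<le> \<theta> k \<and> \<theta> k \<le> 1" and opt: "\<forall>a\<in>{1..K}. \<theta> a \<le> \<theta> ob"
  shows "0 \<le> gapE K m \<pi> \<theta> \<delta> ob s"
proof -
  have "EH K m \<pi> \<theta> \<delta> s (\<lambda>_. 0) \<le> gapE K m \<pi> \<theta> \<delta> ob s"
    unfolding gapE_def using opt by (intro EH_mono[OF th] sum_nonneg mult_nonneg_nonneg) auto
  moreover have "EH K m \<pi> \<theta> \<delta> s (\<lambda>_. 0) = 0" by (simp add: EH_def)
  ultimately show ?thesis by simp
qed

lemma gap_ge_arm:
  assumes th: "\<forall>k\<in>{1..K}. 0 \<le> \<theta> k \<and> \<theta> k \<le> 1" and opt: "\<forall>a\<in>{1..K}. \<theta> a \<le> \<theta> ob"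
    and k: "k \<in> {1..K}"
  shows "(\<theta> ob - \<theta> k) * wk K m \<pi> \<theta> \<delta> k s \<le> gapE K m \<pi> \<theta> \<delta> ob s"
proof -
  have "EH K m \<pi> \<theta> \<delta> s (\<lambda>h. (\<theta> ob - \<theta> k) * pmf (\<pi> (viewH m h)) k) \<le> gapE K m \<pi> \<theta> \<delta> ob s"
    unfolding gapE_def
  proof (intro EH_mono[OF th])
    fix h
    have "pmf (\<pi> (viewH m h)) k * (\<theta> ob - \<theta> k) \<le> (\<Sum>a\<in>{1..K}. pmf (\<pi> (viewH m h)) a * (\<theta> ob - \<theta> a))"
      using opt k by (intro member_le_sum) auto
    thus "(\<theta> ob - \<theta> k) * pmf (\<pi> (viewH m h)) k \<le> (\<Sum>a\<in>{1..K}. pmf (\<pi> (viewH m h)) a * (\<theta> ob - \<theta> a))"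
      by (simp add: mult.commute)
  qed
  thus ?thesis unfolding wk_def EH_cmult .
qed

lemma gap_ge_other:
  assumes vp: "valid_policy K \<pi>" and th: "\<forall>k\<in>{1..K}. 0 \<le> \<theta> k \<and> \<theta> k \<le> 1"
    and k: "k \<in> {1..K}" and gap: "\<forall>a\<in>{1..K}. a \<noteq> k \<longrightarrow> \<Delta> \<le> \<theta> k - \<theta> a" and D0: "0 \<le> \<Delta>"
  shows "\<Delta> * (1 - wk K m \<pi> \<theta> \<delta> k s) \<le> gapE K m \<pi> \<theta> \<delta> k s"
proof -
  have "EH K m \<pi> \<theta> \<delta> s (\<lambda>h. \<Delta> * (1 - pmf (\<pi> (viewH m h)) k)) \<le> gapE K m \<pi> \<theta> \<delta> k s"
    unfolding gapE_def
  proof (intro EH_mono[OF th])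
    fix h
    let ?p = "pmf (\<pi> (viewH m h))"
    have "(\<Sum>a\<in>{1..K}. ?p a * (if a = k then 0 else \<Delta>)) \<le> (\<Sum>a\<in>{1..K}. ?p a * (\<theta> k - \<theta> a))"
      using gap by (intro sum_mono mult_left_mono) auto
    moreover have "(\<Sum>a\<in>{1..K}. ?p a * (if a = k then 0 else \<Delta>)) = \<Delta> * ((\<Sum>a\<in>{1..K}. ?p a) - ?p k)"
    proof -
      have "(\<Sum>a\<in>{1..K}. ?p a * (if a = k then 0 else \<Delta>)) = (\<Sum>a\<in>{1..K}. \<Delta> * ?p a - (if a = k then \<Delta> * ?p a else 0))"
        by (intro sum.cong refl) auto
      also have "\<dots> = \<Delta> * (\<Sum>a\<in>{1..K}. ?p a) - \<Delta> * ?p k"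
        using k by (simp add: sum_subtractf sum_distrib_left sum.delta)
      finally show ?thesis by (simp add: right_diff_distrib)
    qed
    ultimately show "\<Delta> * (1 - ?p k) \<le> (\<Sum>a\<in>{1..K}. ?p a * (\<theta> k - \<theta> a))"
      using sum_policy[OF vp, of "viewH m h"] by simp
  qed
  moreover have "EH K m \<pi> \<theta> \<delta> s (\<lambda>h. \<Delta> * (1 - pmf (\<pi> (viewH m h)) k)) = \<Delta> * (1 - wk K m \<pi> \<theta> \<delta> k s)"
    unfolding EH_cmult EH_diff EH_const[OF vp] wk_def ..
  ultimately show ?thesis by simp
qed

lemma regret_lower:
  assumes vp: "valid_policy K \<pi>" and th: "\<forall>k\<in>{1..K}. 0 \<le> \<theta> k \<and> \<theta> k \<le> 1"
    and ob: "opt_arm K \<theta> \<in> {1..K}" and opt: "\<forall>a\<in>{1..K}. \<theta> a \<le> \<theta> (opt_arm K \<theta>)"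
  shows "tau \<delta> m * (\<Sum>s<n. gapE K m \<pi> \<theta> \<delta> (opt_arm K \<theta>) s) \<le> regret K m \<pi> \<theta> \<delta> (n + m)"
proof -
  let ?ob = "opt_arm K \<theta>"
  let ?g = "\<lambda>s. tau \<delta> (min m (n + m - Suc s)) * gapE K m \<pi> \<theta> \<delta> ?ob s"
  have t0: "0 \<le> tau \<delta> c" for c by (simp add: tau_def)
  have "tau \<delta> m * (\<Sum>s<n. gapE K m \<pi> \<theta> \<delta> ?ob s) = (\<Sum>s<n. ?g s)"
    by (simp add: sum_distrib_left min_absorb1)
  also have "\<dots> \<le> (\<Sum>s<n + m. ?g s)"
    using gap_nonneg[OF th opt] t0 by (intro sum_mono2) auto
  also have "\<dots> = regret K m \<pi> \<theta> \<delta> (n + m)"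
    by (rule regret_formula[OF vp th ob, symmetric])
  finally show ?thesis .
qed

lemma EN_formula:
  assumes vp: "valid_policy K \<pi>"
  shows "EH K m \<pi> \<theta> \<delta> n (\<lambda>h. \<Sum>s<n. (\<lambda>s (a,z). if a = k then 1 else (0::real)) s (h!s)) = (\<Sum>s<n. wk K m \<pi> \<theta> \<delta> k s)"
  unfolding EH_additive[OF vp, where f="\<lambda>s (a,z). if a = k then 1 else (0::real)"] wk_def
proof (intro sum.cong refl EH_cong)
  fix s h
  let ?p = "pmf (\<pi> (viewH m h))"
  have "(\<Sum>a\<in>{1..K}. ?p a * (\<Sum>z\<in>{0..Suc m}. rho m \<delta> (\<theta> a) z * (\<lambda>s (a,z). if a = k then 1 else (0::real)) s (a,z)))
      = (\<Sum>a\<in>{1..K}. if a = k then ?p a else 0)"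
    by (intro sum.cong refl) (simp only: split_def fst_conv snd_conv sum_distrib_right[symmetric] sum_rho mult_1_left, simp)
  also have "\<dots> = ?p k"
    using pmf_policy_out[OF vp, of k] by (simp add: sum.delta')
  finally show "(\<Sum>a\<in>{1..K}. ?p a * (\<Sum>z\<in>{0..Suc m}. rho m \<delta> (\<theta> a) z * (\<lambda>s (a,z). if a = k then 1 else (0::real)) s (a,z))) = ?p k" .
qed


lemma logsum:
  fixes a b :: "'i \<Rightarrow> real"
  assumes fin: "finite S" and nn: "\<And>i. i \<in> S \<Longrightarrow> 0 \<le> a i \<and> 0 \<le> b i \<and> (0 < a i \<longrightarrow> 0 < b i)"
  shows "(\<Sum>i\<in>S. a i) * ln ((\<Sum>i\<in>S. a i) / (\<Sum>i\<in>S. b i)) \<le> (\<Sum>i\<in>S. a i * ln (a i / b i))"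
proof (cases "(\<Sum>i\<in>S. a i) = 0")
  case True
  then have "\<forall>i\<in>S. a i = 0" using sum_nonneg_eq_0_iff[OF fin] nn by blast
  then show ?thesis using True by simp
next
  case False
  define A where "A = (\<Sum>i\<in>S. a i)"
  define B where "B = (\<Sum>i\<in>S. b i)"
  have A0: "0 < A" using False nn unfolding A_def by (metis order_le_less sum_nonneg)
  obtain j where j: "j \<in> S" "0 < a j"
    using False nn by (metis (no_types, lifting) order_le_less sum.neutral)
  have B0: "0 < B"
  proof -
    have "b j \<le> B" unfolding B_def using nn j fin by (intro member_le_sum) auto
    moreover have "0 < b j" using nn j by auto
    ultimately show ?thesis by simp
  qed
  have pt: "a i * ln (A / B) + a i - b i * (A / B) \<le> a i * ln (a i / b i)" if i: "i \<in> S" for i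
  proof (cases "a i = 0")
    case True
    then show ?thesis using nn[OF i] A0 B0 by simp
  next
    case False
    then have ai: "0 < a i" and bi: "0 < b i" using nn[OF i] by auto
    define y where "y = (b i * A) / (a i * B)"
    have y0: "0 < y" unfolding y_def using ai bi A0 B0 by simp
    have "ln y \<le> y - 1" using y0 by (rule ln_le_minus_one)
    have eq: "ln (a i / b i) = ln (A / B) - ln y"
    proof -
      have "a i / b i = (A / B) / y" unfolding y_def using ai bi A0 B0 by (simp add: field_simps)
      thus ?thesis using y0 A0 B0 by (simp add: ln_div ln_mult)
    qed
    have "a i * ln (a i / b i) = a i * ln (A / B) - a i * ln y" unfolding eq by (simp add: algebra_simps)
    also have "\<dots> \<ge> a i * ln (A / B) - a i * (y - 1)"
      using \<open>ln y \<le> y - 1\<close> ai by (simp add: mult_left_mono)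
    moreover have "a i * (y - 1) = b i * (A / B) - a i" unfolding y_def using ai B0 by (simp add: field_simps)
    ultimately show ?thesis by simp
  qed
  have "(\<Sum>i\<in>S. a i * ln (A / B) + a i - b i * (A / B)) = (\<Sum>i\<in>S. a i) * ln (A / B) + (\<Sum>i\<in>S. a i) - (\<Sum>i\<in>S. b i) * (A / B)"
    by (simp only: sum.distrib sum_subtractf sum_distrib_right)
  also have "\<dots> = A * ln (A / B)" unfolding A_def[symmetric] B_def[symmetric] using B0 by simp
  finally have "A * ln (A / B) = (\<Sum>i\<in>S. a i * ln (A / B) + a i - b i * (A / B))" by simp
  also have "\<dots> \<le> (\<Sum>i\<in>S. a i * ln (a i / b i))"
    by (intro sum_mono pt)
  finally show ?thesis unfolding A_def B_def .
qed

lemma term_ge_diff: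
  fixes a b :: real
  assumes "0 \<le> a" "0 \<le> b" "0 < a \<Longrightarrow> 0 < b"
  shows "a - b \<le> a * ln (a / b)"
proof (cases "a = 0")
  case True thus ?thesis using assms by simp
next
  case False
  then have a: "0 < a" and b: "0 < b" using assms by auto
  have "ln (b / a) \<le> b / a - 1" using a b by (intro ln_le_minus_one) simp
  moreover have "ln (a / b) = - ln (b / a)" using a b by (simp add: ln_div)
  ultimately have "1 - b / a \<le> ln (a / b)" by simp
  then have "a * (1 - b / a) \<le> a * ln (a / b)" using a by (simp add: mult_left_mono)
  moreover have "a * (1 - b / a) = a - b" using a by (simp add: field_simps)
  ultimately show ?thesis by simp
qed

lemma xlnx_ge: "0 \<le> (y::real) \<Longrightarrow> -1 \<le> y * ln y"
proof (cases "y = 0")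
  case False
  assume "0 \<le> y"
  then have y: "0 < y" using False by simp
  have "ln (1 / y) \<le> 1 / y - 1" using y by (intro ln_le_minus_one) simp
  then have "- ln y \<le> 1 / y - 1" using y by (simp add: ln_div)
  then have "y * (- ln y) \<le> y * (1 / y - 1)" using y by (intro mult_left_mono) auto
  moreover have "y * (1 / y - 1) = 1 - y" using y by (simp add: field_simps)
  ultimately have "- (y * ln y) \<le> 1 - y" by simp
  thus ?thesis using y by linarith
qed simp

lemma DP:
  fixes P Q Z :: "'i \<Rightarrow> real"
  assumes fin: "finite S"
    and nn: "\<And>x. x \<in> S \<Longrightarrow> 0 \<le> P x \<and> 0 \<le> Q x \<and> (0 < P x \<longrightarrow> 0 < Q x) \<and> 0 \<le> Z x \<and> Z x \<le> 1"
    and sP: "(\<Sum>x\<in>S. P x) = 1" and sQ: "(\<Sum>x\<in>S. Q x) = 1"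
    and q1: "(\<Sum>x\<in>S. Q x * Z x) < 1"
  shows "(1 - (\<Sum>x\<in>S. P x * Z x)) * ln (1 / (1 - (\<Sum>x\<in>S. Q x * Z x))) - 2 \<le> (\<Sum>x\<in>S. P x * ln (P x / Q x))"
proof -
  define p where "p = (\<Sum>x\<in>S. P x * Z x)"
  define q where "q = (\<Sum>x\<in>S. Q x * Z x)"
  have split: "P x * ln (P x / Q x) = P x * Z x * ln (P x * Z x / (Q x * Z x)) + P x * (1 - Z x) * ln (P x * (1 - Z x) / (Q x * (1 - Z x)))"
    if x: "x \<in> S" for x
  proof (cases "P x = 0")
    case True thus ?thesis by simp
  next
    case False
    then have Q0: "0 < Q x" using nn[OF x] by auto
    consider "Z x = 0" | "Z x = 1" | "0 < Z x \<and> Z x < 1" using nn[OF x] by fastforce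
    then show ?thesis
    proof cases
      case 3
      then have "P x * Z x / (Q x * Z x) = P x / Q x" "P x * (1 - Z x) / (Q x * (1 - Z x)) = P x / Q x"
        by auto
      thus ?thesis by (simp add: algebra_simps)
    qed simp_all
  qed
  have p01: "0 \<le> p" "p \<le> 1"
  proof -
    show "0 \<le> p" unfolding p_def using nn by (intro sum_nonneg) auto
    have "p \<le> (\<Sum>x\<in>S. P x)" unfolding p_def using nn by (intro sum_mono) (simp add: mult_left_le)
    thus "p \<le> 1" using sP by simp
  qed
  have q0: "0 \<le> q" unfolding q_def using nn by (intro sum_nonneg) auto
  have g1: "p - q \<le> (\<Sum>x\<in>S. P x * Z x * ln (P x * Z x / (Q x * Z x)))"
  proof -
    have "p - q = (\<Sum>x\<in>S. P x * Z x - Q x * Z x)" unfolding p_def q_def by (simp add: sum_subtractf)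
    also have "\<dots> \<le> (\<Sum>x\<in>S. P x * Z x * ln (P x * Z x / (Q x * Z x)))"
    proof (intro sum_mono term_ge_diff)
      fix x assume x: "x \<in> S"
      show "0 \<le> P x * Z x" "0 \<le> Q x * Z x" using nn[OF x] by auto
      show "0 < P x * Z x \<Longrightarrow> 0 < Q x * Z x" using nn[OF x] by (simp add: zero_less_mult_iff)
    qed
    finally show ?thesis .
  qed
  have g0: "(1 - p) * ln ((1 - p) / (1 - q)) \<le> (\<Sum>x\<in>S. P x * (1 - Z x) * ln (P x * (1 - Z x) / (Q x * (1 - Z x))))"
  proof -
    have A: "(\<Sum>x\<in>S. P x * (1 - Z x)) = 1 - p" unfolding p_def using sP by (simp add: right_diff_distrib sum_subtractf)
    have B: "(\<Sum>x\<in>S. Q x * (1 - Z x)) = 1 - q" unfolding q_def using sQ by (simp add: right_diff_distrib sum_subtractf)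
    have "(\<Sum>x\<in>S. P x * (1 - Z x)) * ln ((\<Sum>x\<in>S. P x * (1 - Z x)) / (\<Sum>x\<in>S. Q x * (1 - Z x)))
        \<le> (\<Sum>x\<in>S. P x * (1 - Z x) * ln (P x * (1 - Z x) / (Q x * (1 - Z x))))"
    proof (rule logsum[OF fin])
      fix x assume x: "x \<in> S"
      show "0 \<le> P x * (1 - Z x) \<and> 0 \<le> Q x * (1 - Z x) \<and> (0 < P x * (1 - Z x) \<longrightarrow> 0 < Q x * (1 - Z x))"
        using nn[OF x] by (simp add: zero_less_mult_iff)
    qed
    thus ?thesis unfolding A B .
  qed
  have tot: "(\<Sum>x\<in>S. P x * ln (P x / Q x)) \<ge> (1 - p) * ln ((1 - p) / (1 - q)) + (p - q)"
  proof -
    have "(\<Sum>x\<in>S. P x * ln (P x / Q x)) = (\<Sum>x\<in>S. P x * Z x * ln (P x * Z x / (Q x * Z x))) + (\<Sum>x\<in>S. P x * (1 - Z x) * ln (P x * (1 - Z x) / (Q x * (1 - Z x))))"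
      by (simp add: split sum.distrib)
    thus ?thesis using g0 g1 by simp
  qed
  have last: "(1 - p) * ln (1 / (1 - q)) - 1 \<le> (1 - p) * ln ((1 - p) / (1 - q))"
  proof (cases "p = 1")
    case True thus ?thesis by simp
  next
    case False
    then have p1: "0 < 1 - p" using p01 by simp
    have q1': "0 < 1 - q" using q1 unfolding q_def by simp
    have "ln ((1 - p) / (1 - q)) = ln (1 - p) + ln (1 / (1 - q))"
      using p1 q1' by (simp add: ln_div)
    then have "(1 - p) * ln ((1 - p) / (1 - q)) = (1 - p) * ln (1 - p) + (1 - p) * ln (1 / (1 - q))"
      by (simp add: algebra_simps)
    moreover have "-1 \<le> (1 - p) * ln (1 - p)" using p1 by (intro xlnx_ge) simp
    ultimately show ?thesis by simp
  qed
  show ?thesis using tot last p01 q0 q1 unfolding p_def[symmetric] q_def[symmetric]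
    by (simp add: q_def)
qed


lemma rho_pos_transfer:
  assumes "z \<le> Suc m" "0 < x'" "x' < 1" "0 < rho m \<delta> x z"
  shows "0 < rho m \<delta> x' z"
proof -
  have t: "0 \<le> tau \<delta> m" "tau \<delta> m \<le> 1" by (auto simp: tau_def)
  show ?thesis
  proof (cases "z \<le> m")
    case True
    then have "0 < x * pmf \<delta> z" using assms by (simp add: rho_def)
    then have "pmf \<delta> z \<noteq> 0" by auto
    then have "0 < pmf \<delta> z" using pmf_nonneg[of \<delta> z] by linarith
    thus ?thesis using True assms by (simp add: rho_def)
  next
    case False
    then have z: "z = Suc m" using assms by simp
    have "x' * tau \<delta> m \<le> x' * 1" using t assms by (intro mult_left_mono) auto
    then have "x' * tau \<delta> m \<le> x'" by (simp only: mult_1_right)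
    then have "x' * tau \<delta> m < 1" using assms(3) by linarith
    thus ?thesis using z by (simp add: rho_def)
  qed
qed

definition KLn :: "nat \<Rightarrow> nat \<Rightarrow> policy \<Rightarrow> (nat \<Rightarrow> real) \<Rightarrow> (nat \<Rightarrow> real) \<Rightarrow> nat pmf \<Rightarrow> nat \<Rightarrow> real" where
  "KLn K m \<pi> \<theta> \<theta>' \<delta> n = (\<Sum>h\<in>Sn K m n. Pn m \<pi> \<theta> \<delta> h * ln (Pn m \<pi> \<theta> \<delta> h / Pn m \<pi> \<theta>' \<delta> h))"

lemma KL_pointwise:
  assumes h: "h \<in> Sn K m n" and th: "\<forall>k\<in>{1..K}. 0 \<le> \<theta> k \<and> \<theta> k \<le> 1"
    and th': "\<forall>k\<in>{1..K}. 0 < \<theta>' k \<and> \<theta>' k < 1"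
  shows "Pn m \<pi> \<theta> \<delta> h * ln (Pn m \<pi> \<theta> \<delta> h / Pn m \<pi> \<theta>' \<delta> h)
       = Pn m \<pi> \<theta> \<delta> h * (\<Sum>s<n. ln (rho m \<delta> (\<theta> (fst (h!s))) (snd (h!s)) / rho m \<delta> (\<theta>' (fst (h!s))) (snd (h!s))))"
    and "0 < Pn m \<pi> \<theta> \<delta> h \<Longrightarrow> 0 < Pn m \<pi> \<theta>' \<delta> h"
proof -
  have lh: "length h = n" using h by (simp add: Sn_def)
  define pf where "pf s = pmf (\<pi> (viewH m (take s h))) (fst (h!s))" for s
  define r where "r s = rho m \<delta> (\<theta> (fst (h!s))) (snd (h!s))" for s
  define r' where "r' s = rho m \<delta> (\<theta>' (fst (h!s))) (snd (h!s))" for s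
  have P: "Pn m \<pi> \<theta> \<delta> h = (\<Prod>s<n. pf s * r s)" unfolding Pn_def pf_def r_def lh ..
  have P': "Pn m \<pi> \<theta>' \<delta> h = (\<Prod>s<n. pf s * r' s)" unfolding Pn_def pf_def r'_def lh ..
  have mem: "s < n \<Longrightarrow> fst (h!s) \<in> {1..K} \<and> snd (h!s) \<le> Suc m" for s
  proof -
    assume "s < n"
    then have "h!s \<in> set h" using lh by simp
    thus ?thesis using h unfolding Sn_def by auto
  qed
  have pos: "\<forall>s<n. 0 < pf s \<and> 0 < r s \<and> 0 < r' s" if Ppos: "Pn m \<pi> \<theta> \<delta> h \<noteq> 0"
  proof (intro allI impI)
    fix s assume s: "s < n"
    have "pf s * r s \<noteq> 0" using Ppos unfolding P by (simp add: prod_zero_iff) (use s in blast)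
    moreover have "0 \<le> pf s" unfolding pf_def by simp
    moreover have "0 \<le> r s" unfolding r_def using rho_bounds th mem[OF s] by auto
    ultimately have a: "0 < pf s" "0 < r s" by (auto simp: order_le_less)
    moreover have "0 < r' s" unfolding r'_def using rho_pos_transfer[of "snd (h!s)" m "\<theta>' (fst (h!s))"] a(2) mem[OF s] th'
      unfolding r_def by auto
    ultimately show "0 < pf s \<and> 0 < r s \<and> 0 < r' s" by simp
  qed
  show "0 < Pn m \<pi> \<theta> \<delta> h \<Longrightarrow> 0 < Pn m \<pi> \<theta>' \<delta> h"
    using pos unfolding P' by (intro prod_pos) auto
  show "Pn m \<pi> \<theta> \<delta> h * ln (Pn m \<pi> \<theta> \<delta> h / Pn m \<pi> \<theta>' \<delta> h)
       = Pn m \<pi> \<theta> \<delta> h * (\<Sum>s<n. ln (rho m \<delta> (\<theta> (fst (h!s))) (snd (h!s)) / rho m \<delta> (\<theta>' (fst (h!s))) (snd (h!s))))"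
  proof (cases "Pn m \<pi> \<theta> \<delta> h = 0")
    case True thus ?thesis by simp
  next
    case False
    note ps = pos[OF False]
    have "Pn m \<pi> \<theta> \<delta> h / Pn m \<pi> \<theta>' \<delta> h = (\<Prod>s<n. (pf s * r s) / (pf s * r' s))"
      unfolding P P' by (rule prod_dividef[symmetric])
    also have "\<dots> = (\<Prod>s<n. r s / r' s)"
    proof (intro prod.cong refl)
      fix s assume "s \<in> {..<n}"
      then have "0 < pf s" using ps by auto
      thus "(pf s * r s) / (pf s * r' s) = r s / r' s" by simp
    qed
    moreover have "ln (\<Prod>s<n. r s / r' s) = (\<Sum>s<n. ln (r s / r' s))"
      by (rule ln_prod) (use ps in auto)
    ultimately have "ln (Pn m \<pi> \<theta> \<delta> h / Pn m \<pi> \<theta>' \<delta> h) = (\<Sum>s<n. ln (r s / r' s))"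
      by simp
    thus ?thesis unfolding r_def r'_def by simp
  qed
qed

lemma KL_formula:
  assumes vp: "valid_policy K \<pi>" and th: "\<forall>k\<in>{1..K}. 0 \<le> \<theta> k \<and> \<theta> k \<le> 1"
    and th': "\<forall>k\<in>{1..K}. 0 < \<theta>' k \<and> \<theta>' k < 1"
    and k: "k \<in> {1..K}" and same: "\<forall>a. a \<noteq> k \<longrightarrow> \<theta>' a = \<theta> a"
  shows "KLn K m \<pi> \<theta> \<theta>' \<delta> n = (\<Sum>s<n. wk K m \<pi> \<theta> \<delta> k s) *
           (\<Sum>z\<in>{0..Suc m}. rho m \<delta> (\<theta> k) z * ln (rho m \<delta> (\<theta> k) z / rho m \<delta> (\<theta>' k) z))"
proof -
  define Dk where "Dk = (\<Sum>z\<in>{0..Suc m}. rho m \<delta> (\<theta> k) z * ln (rho m \<delta> (\<theta> k) z / rho m \<delta> (\<theta>' k) z))"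
  have "KLn K m \<pi> \<theta> \<theta>' \<delta> n = EH K m \<pi> \<theta> \<delta> n (\<lambda>h. \<Sum>s<n. (\<lambda>s (a,z). ln (rho m \<delta> (\<theta> a) z / rho m \<delta> (\<theta>' a) z)) s (h!s))"
    unfolding KLn_def EH_def
    by (intro sum.cong refl) (simp add: KL_pointwise(1)[OF _ th th'] split_def)
  also have "\<dots> = (\<Sum>s<n. EH K m \<pi> \<theta> \<delta> s (\<lambda>h. pmf (\<pi> (viewH m h)) k * Dk))"
    unfolding EH_additive[OF vp, where f="\<lambda>s (a,z). ln (rho m \<delta> (\<theta> a) z / rho m \<delta> (\<theta>' a) z)"]
  proof (intro sum.cong refl EH_cong)
    fix s h
    let ?p = "pmf (\<pi> (viewH m h))"
    have "(\<Sum>a\<in>{1..K}. ?p a * (\<Sum>z\<in>{0..Suc m}. rho m \<delta> (\<theta> a) z * (\<lambda>s (a,z). ln (rho m \<delta> (\<theta> a) z / rho m \<delta> (\<theta>' a) z)) s (a,z)))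
       = (\<Sum>a\<in>{1..K}. if a = k then ?p a * Dk else 0)"
    proof (intro sum.cong refl)
      fix a
      show "?p a * (\<Sum>z\<in>{0..Suc m}. rho m \<delta> (\<theta> a) z * (\<lambda>s (a,z). ln (rho m \<delta> (\<theta> a) z / rho m \<delta> (\<theta>' a) z)) s (a,z)) = (if a = k then ?p a * Dk else 0)"
      proof (cases "a = k")
        case True thus ?thesis by (simp add: Dk_def)
      next
        case False
        have "ln (rho m \<delta> (\<theta> a) z / rho m \<delta> (\<theta> a) z) = 0" for z
          by (cases "rho m \<delta> (\<theta> a) z = 0") simp_all
        thus ?thesis using False same by simp
      qed
    qed
    also have "\<dots> = ?p k * Dk" using k by (subst sum.delta) auto
    finally show "(\<Sum>a\<in>{1..K}. ?p a * (\<Sum>z\<in>{0..Suc m}. rho m \<delta> (\<theta> a) z * (\<lambda>s (a,z). ln (rho m \<delta> (\<theta> a) z / rho m \<delta> (\<theta>' a) z)) s (a,z))) = ?p k * Dk" .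
  qed
  also have "\<dots> = (\<Sum>s<n. wk K m \<pi> \<theta> \<delta> k s * Dk)"
    unfolding wk_def using EH_cmult[of K m \<pi> \<theta> \<delta> _ Dk] by (simp add: mult.commute)
  also have "\<dots> = (\<Sum>s<n. wk K m \<pi> \<theta> \<delta> k s) * Dk" by (simp add: sum_distrib_right)
  finally show ?thesis unfolding Dk_def .
qed

lemma Dk_eq:
  assumes t: "0 < tau \<delta> m" and a: "0 < y" and b: "0 < x"
  shows "(\<Sum>z\<in>{0..Suc m}. rho m \<delta> y z * ln (rho m \<delta> y z / rho m \<delta> x z)) = kl_bern (tau \<delta> m * y) (tau \<delta> m * x)"
proof -
  have "(\<Sum>z\<in>{0..m}. rho m \<delta> y z * ln (rho m \<delta> y z / rho m \<delta> x z)) = (\<Sum>z\<in>{0..m}. pmf \<delta> z * (y * ln (y / x)))"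
  proof (intro sum.cong refl)
    fix z assume z: "z \<in> {0..m}"
    show "rho m \<delta> y z * ln (rho m \<delta> y z / rho m \<delta> x z) = pmf \<delta> z * (y * ln (y / x))"
    proof (cases "pmf \<delta> z = 0")
      case True thus ?thesis using z by (simp add: rho_def)
    next
      case False
      then have "y * pmf \<delta> z / (x * pmf \<delta> z) = y / x" by simp
      thus ?thesis using z by (simp add: rho_def)
    qed
  qed
  also have "\<dots> = tau \<delta> m * (y * ln (y / x))" by (simp only: sum_distrib_right[symmetric] tau_sum)
  also have "\<dots> = tau \<delta> m * y * ln (y / x)" by (simp only: mult.assoc)
  also have "y / x = (tau \<delta> m * y) / (tau \<delta> m * x)" using t by simp
  finally have 1: "(\<Sum>z\<in>{0..m}. rho m \<delta> y z * ln (rho m \<delta> y z / rho m \<delta> x z)) = tau \<delta> m * y * ln ((tau \<delta> m * y) / (tau \<delta> m * x))" .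
  have "(\<Sum>z\<in>{0..Suc m}. rho m \<delta> y z * ln (rho m \<delta> y z / rho m \<delta> x z)) = (\<Sum>z\<in>{0..m}. rho m \<delta> y z * ln (rho m \<delta> y z / rho m \<delta> x z)) + rho m \<delta> y (Suc m) * ln (rho m \<delta> y (Suc m) / rho m \<delta> x (Suc m))"
    by (simp only: sum.atLeast0_atMost_Suc)
  also have "\<dots> = kl_bern (tau \<delta> m * y) (tau \<delta> m * x)"
    unfolding 1 by (simp add: kl_bern_def rho_def mult.commute)
  finally show ?thesis .
qed

lemma KL_lower:
  assumes vp: "valid_policy K \<pi>" and th: "\<forall>k\<in>{1..K}. 0 \<le> \<theta> k \<and> \<theta> k \<le> 1"
    and th': "\<forall>k\<in>{1..K}. 0 < \<theta>' k \<and> \<theta>' k < 1"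
    and k: "k \<in> {1..K}" and same: "\<forall>a. a \<noteq> k \<longrightarrow> \<theta>' a = \<theta> a"
    and t: "0 < tau \<delta> m" and pk: "0 < \<theta> k"
  shows "(1 - (\<Sum>s<n. wk K m \<pi> \<theta> \<delta> k s) / (n+1)) * ln (1 / (1 - (\<Sum>s<n. wk K m \<pi> \<theta>' \<delta> k s) / (n+1))) - 2
     \<le> (\<Sum>s<n. wk K m \<pi> \<theta> \<delta> k s) * kl_bern (tau \<delta> m * \<theta> k) (tau \<delta> m * \<theta>' k)"
proof -
  have th'': "\<forall>k\<in>{1..K}. 0 \<le> \<theta>' k \<and> \<theta>' k \<le> 1" using th' by auto
  define N where "N h = (\<Sum>s<n. (\<lambda>s (a,z). if a = k then 1 else (0::real)) s (h!s))" for h :: "(nat \<times> nat) list"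
  define Z where "Z h = N h / (n+1)" for h
  have N01: "0 \<le> N h \<and> N h \<le> n" for h
  proof -
    have "N h \<le> (\<Sum>s<n. 1)" unfolding N_def by (intro sum_mono) (simp add: split_def)
    moreover have "0 \<le> N h" unfolding N_def by (intro sum_nonneg) (simp add: split_def)
    ultimately show ?thesis by simp
  qed
  have EZ: "(\<Sum>h\<in>Sn K m n. Pn m \<pi> tt \<delta> h * Z h) = (\<Sum>s<n. wk K m \<pi> tt \<delta> k s) / (n+1)" for tt
  proof -
    have "(\<Sum>h\<in>Sn K m n. Pn m \<pi> tt \<delta> h * Z h) = EH K m \<pi> tt \<delta> n (\<lambda>h. (1 / (n+1)) * N h)"
      unfolding EH_def Z_def by simp
    also have "\<dots> = (1 / (n+1)) * (\<Sum>s<n. wk K m \<pi> tt \<delta> k s)"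
      unfolding EH_cmult N_def EN_formula[OF vp] ..
    finally show ?thesis by simp
  qed
  have W'le: "(\<Sum>s<n. wk K m \<pi> \<theta>' \<delta> k s) \<le> n"
  proof -
    have "(\<Sum>s<n. wk K m \<pi> \<theta>' \<delta> k s) \<le> (\<Sum>s<n. 1)" using wk_bounds[OF vp th''] by (intro sum_mono) auto
    thus ?thesis by simp
  qed
  have "(1 - (\<Sum>h\<in>Sn K m n. Pn m \<pi> \<theta> \<delta> h * Z h)) * ln (1 / (1 - (\<Sum>h\<in>Sn K m n. Pn m \<pi> \<theta>' \<delta> h * Z h))) - 2
      \<le> (\<Sum>h\<in>Sn K m n. Pn m \<pi> \<theta> \<delta> h * ln (Pn m \<pi> \<theta> \<delta> h / Pn m \<pi> \<theta>' \<delta> h))"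
  proof (rule DP[OF finite_Sn])
    fix h assume h: "h \<in> Sn K m n"
    show "0 \<le> Pn m \<pi> \<theta> \<delta> h \<and> 0 \<le> Pn m \<pi> \<theta>' \<delta> h \<and> (0 < Pn m \<pi> \<theta> \<delta> h \<longrightarrow> 0 < Pn m \<pi> \<theta>' \<delta> h) \<and> 0 \<le> Z h \<and> Z h \<le> 1"
      using Pn_nonneg[OF th h] Pn_nonneg[OF th'' h] KL_pointwise(2)[OF h th th'] N01[of h]
      unfolding Z_def by (auto simp: field_simps)
  next
    show "(\<Sum>h\<in>Sn K m n. Pn m \<pi> \<theta> \<delta> h) = 1" using EH_one[OF vp, of m \<theta> \<delta> n] by (simp add: EH_def)
    show "(\<Sum>h\<in>Sn K m n. Pn m \<pi> \<theta>' \<delta> h) = 1" using EH_one[OF vp, of m \<theta>' \<delta> n] by (simp add: EH_def)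
    show "(\<Sum>h\<in>Sn K m n. Pn m \<pi> \<theta>' \<delta> h * Z h) < 1" unfolding EZ using W'le by (simp add: field_simps)
  qed
  also have "\<dots> = KLn K m \<pi> \<theta> \<theta>' \<delta> n" by (simp add: KLn_def)
  also have "\<dots> = (\<Sum>s<n. wk K m \<pi> \<theta> \<delta> k s) * kl_bern (tau \<delta> m * \<theta> k) (tau \<delta> m * \<theta>' k)"
  proof -
    have x0: "0 < \<theta>' k" using th' k by auto
    show ?thesis unfolding KL_formula[OF vp th th' k same] Dk_eq[OF t pk x0] ..
  qed
  finally show ?thesis unfolding EZ .
qed


lemma ln_nat_at_top: "filterlim (\<lambda>n::nat. ln (real n)) at_top sequentially"
  by (rule filterlim_compose[OF ln_at_top filterlim_real_sequentially])

lemma eventually_ln_ge: "eventually (\<lambda>n::nat. M \<le> ln (real n + 1) \<and> M \<le> ln (real n) \<and> 1 \<le> n) sequentially"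
proof -
  have "eventually (\<lambda>n::nat. M \<le> ln (real n)) sequentially"
    using ln_nat_at_top by (simp add: filterlim_at_top)
  moreover have "eventually (\<lambda>n::nat. 1 \<le> n) sequentially" by (rule eventually_ge_at_top)
  ultimately show ?thesis
  proof (rule eventually_elim2)
    fix n :: nat assume "M \<le> ln (real n)" "1 \<le> n"
    moreover have "ln (real n) \<le> ln (real n + 1)" using \<open>1 \<le> n\<close> by (subst ln_le_cancel_iff) auto
    ultimately have "M \<le> ln (real n + 1)" by linarith
    thus "M \<le> ln (real n + 1) \<and> M \<le> ln (real n) \<and> 1 \<le> n" using \<open>M \<le> ln (real n)\<close> \<open>1 \<le> n\<close> by simp
  qed
qed

lemma core:
  fixes W W' :: "nat \<Rightarrow> real" and d c B :: real and m :: nat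
  assumes d0: "0 < d" and c0: "0 \<le> c" and cd: "c * d < 1" and B0: "0 < B" and m1: "1 \<le> m"
    and H1: "\<And>n. (1 - W n / (real n + 1)) * ln (1 / (1 - W' n / (real n + 1))) - 2 \<le> W n * d"
    and H2: "(\<lambda>n. W n / (real n + 1)) \<longlonglongrightarrow> 0"
    and H3: "\<And>\<alpha>. 0 < \<alpha> \<Longrightarrow> \<alpha> < 1 \<Longrightarrow> eventually (\<lambda>n. real n - W' n \<le> B * real (n + m) powr \<alpha>) sequentially"
    and W'le: "\<And>n. W' n \<le> real n" and W0: "\<And>n. 0 \<le> W n"
  shows "eventually (\<lambda>n. c * ln (real n) \<le> W n) sequentially"
proof -
  define \<gamma> where "\<gamma> = (1 - c * d) / 4"
  have g0: "0 < \<gamma>" using cd unfolding \<gamma>_def by simp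
  have g1: "\<gamma> \<le> 1 / 4" using c0 d0 unfolding \<gamma>_def by simp
  define C1 where "C1 = ln ((1 + B) * real m powr \<gamma>)"
  have mg: "1 \<le> real m powr \<gamma>" using m1 g0 by (simp add: ge_one_powr_ge_zero)
  have C10: "0 \<le> C1"
  proof -
    have "1 * 1 \<le> (1 + B) * real m powr \<gamma>" using mg B0 by (intro mult_mono) auto
    thus ?thesis unfolding C1_def by simp
  qed
  define M where "M = max ((C1 + 2) / (2 * \<gamma>)) (C1 / (1 - \<gamma>))"
  have E1: "eventually (\<lambda>n. W n / (real n + 1) < \<gamma>) sequentially"
    using order_tendstoD(2)[OF H2 g0] .
  have E2: "eventually (\<lambda>n. real n - W' n \<le> B * real (n + m) powr \<gamma>) sequentially"
    using H3[OF g0] g1 by simp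
  show ?thesis
    using E1 E2 eventually_ln_ge[of M]
  proof (eventually_elim)
    case (elim n)
    let ?L = "ln (real n + 1)"
    define p where "p = W n / (real n + 1)"
    define q where "q = W' n / (real n + 1)"
    have n1: "0 < real n + 1" by simp
    have LM: "M \<le> ?L" and n1': "1 \<le> n" using elim by auto
    have L0: "0 \<le> ?L" by simp
    have p_lt: "p < \<gamma>" using elim unfolding p_def by simp
    have p0: "0 \<le> p" unfolding p_def using W0[of n] by simp
    have q1: "0 < 1 - q" unfolding q_def using W'le[of n] n1 by (simp add: field_simps)
    have nm: "1 \<le> real (n + m) powr \<gamma>" using g0 m1 by (intro ge_one_powr_ge_zero) auto
    define u where "u = (1 + B) * real m powr \<gamma> * (real n + 1) powr (\<gamma> - 1)"
    have qu: "1 - q \<le> u"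
    proof -
      have "1 - q = (real n + 1 - W' n) / (real n + 1)" unfolding q_def using n1 by (simp add: field_simps)
      also have "\<dots> \<le> (1 + B * real (n + m) powr \<gamma>) / (real n + 1)"
        using elim n1 by (intro divide_right_mono) auto
      also have "\<dots> \<le> ((1 + B) * real (n + m) powr \<gamma>) / (real n + 1)"
        using nm B0 n1 by (intro divide_right_mono) (auto simp: algebra_simps)
      also have "\<dots> \<le> ((1 + B) * (real m powr \<gamma> * (real n + 1) powr \<gamma>)) / (real n + 1)"
      proof -
        have "real n * 1 \<le> real n * real m" using m1 by (intro mult_left_mono) auto
        then have "real (n + m) \<le> real m * (real n + 1)" by (simp add: algebra_simps)
        then have "real (n + m) powr \<gamma> \<le> (real m * (real n + 1)) powr \<gamma>" using g0 by (intro powr_mono2) auto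
        also have "\<dots> = real m powr \<gamma> * (real n + 1) powr \<gamma>" by (simp add: powr_mult)
        finally show ?thesis using B0 n1 by (intro divide_right_mono mult_left_mono) auto
      qed
      also have "\<dots> = u"
      proof -
        have "(real n + 1) powr \<gamma> / (real n + 1) = (real n + 1) powr (\<gamma> - 1)"
          using n1 by (simp add: powr_diff)
        thus ?thesis unfolding u_def by (simp add: field_simps)
      qed
      finally show ?thesis .
    qed
    have u0: "0 < u" unfolding u_def using B0 m1 by simp
    have lnu: "ln u = C1 + (\<gamma> - 1) * ?L"
      unfolding u_def C1_def using B0 m1 by (simp add: ln_mult ln_powr)
    have lnq: "(1 - \<gamma>) * ?L - C1 \<le> ln (1 / (1 - q))"
    proof -
      have "ln (1 - q) \<le> ln u" using qu q1 u0 by simp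
      moreover have "ln (1 / (1 - q)) = - ln (1 - q)" using q1 by (simp add: ln_div)
      ultimately show ?thesis using lnu by (simp add: algebra_simps)
    qed
    have X0: "0 \<le> (1 - \<gamma>) * ?L - C1"
    proof -
      have "C1 / (1 - \<gamma>) \<le> ?L" using LM unfolding M_def by simp
      then have "C1 \<le> ?L * (1 - \<gamma>)" using g1 by (simp add: divide_le_eq)
      thus ?thesis by (simp add: algebra_simps)
    qed
    have "(1 - \<gamma>) * ((1 - \<gamma>) * ?L - C1) \<le> (1 - p) * ln (1 / (1 - q))"
      using p_lt g1 X0 lnq by (intro mult_mono) auto
    moreover have "(1 - 2 * \<gamma>) * ?L - C1 \<le> (1 - \<gamma>) * ((1 - \<gamma>) * ?L - C1)"
    proof -
      have "(1 - \<gamma>) * ((1 - \<gamma>) * ?L - C1) = (1 - 2 * \<gamma>) * ?L - C1 + (\<gamma> * \<gamma> * ?L + \<gamma> * C1)"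
        by (simp add: algebra_simps power2_eq_square)
      moreover have "0 \<le> \<gamma> * \<gamma> * ?L + \<gamma> * C1" using g0 L0 C10 by simp
      ultimately show ?thesis by simp
    qed
    moreover have "C1 + 2 \<le> 2 * \<gamma> * ?L"
    proof -
      have "(C1 + 2) / (2 * \<gamma>) \<le> ?L" using LM unfolding M_def by simp
      thus ?thesis using g0 by (simp add: divide_le_eq mult.commute)
    qed
    moreover have "(1 - p) * ln (1 / (1 - q)) - 2 \<le> W n * d" using H1[of n] unfolding p_def q_def .
    ultimately have "(1 - 4 * \<gamma>) * ?L \<le> W n * d" by (simp add: algebra_simps)
    moreover have "1 - 4 * \<gamma> = c * d" unfolding \<gamma>_def by (simp add: field_simps)
    ultimately have "c * d * ?L \<le> W n * d" by simp
    then have "c * ?L * d \<le> W n * d" by (simp add: algebra_simps)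
    then have "c * ?L \<le> W n" using d0 by simp
    moreover have "c * ln (real n) \<le> c * ?L" using c0 n1' by (intro mult_left_mono) auto
    ultimately show ?case by simp
  qed
qed


lemma opt_unique:
  assumes "ob \<in> {1..K}" "\<forall>j\<in>{1..K}. j \<noteq> ob \<longrightarrow> \<theta> j < \<theta> ob"
  shows "opt_arm K \<theta> = ob"
  unfolding opt_arm_def
proof (rule some_equality)
  show "ob \<in> {1..K} \<and> (\<forall>j\<in>{1..K}. \<theta> j \<le> \<theta> ob)" using assms by force
  fix k assume k: "k \<in> {1..K} \<and> (\<forall>j\<in>{1..K}. \<theta> j \<le> \<theta> k)"
  show "k = ob"
  proof (rule ccontr)
    assume "k \<noteq> ob"
    then have "\<theta> k < \<theta> ob" using assms k by auto
    moreover have "\<theta> ob \<le> \<theta> k" using k assms by auto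
    ultimately show False by simp
  qed
qed

lemma gapE_sum: "gapE K m \<pi> \<theta> \<delta> ob s = (\<Sum>a\<in>{1..K}. (\<theta> ob - \<theta> a) * wk K m \<pi> \<theta> \<delta> a s)"
  unfolding gapE_def wk_def EH_cmult[symmetric] EH_sum[symmetric]
  by (intro EH_cong) (simp add: mult.commute)

lemma kl_pos:
  assumes "0 < p" "p < 1" "0 < q" "q < 1" "p \<noteq> q"
  shows "0 < kl_bern p q"
proof -
  have s1: "ln (q / p) < q / p - 1"
  proof -
    have "ln (q / p) \<le> q / p - 1" using assms by (intro ln_le_minus_one) simp
    moreover have "ln (q / p) \<noteq> q / p - 1"
    proof
      assume "ln (q / p) = q / p - 1"
      then have "q / p = 1" using assms by (intro ln_eq_minus_one) auto
      thus False using assms by simp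
    qed
    ultimately show ?thesis by simp
  qed
  have s2: "ln ((1 - q) / (1 - p)) \<le> (1 - q) / (1 - p) - 1" using assms by (intro ln_le_minus_one) simp
  have e1: "ln (p / q) = - ln (q / p)" using assms by (simp add: ln_div)
  have e2: "ln ((1 - p) / (1 - q)) = - ln ((1 - q) / (1 - p))" using assms by (simp add: ln_div)
  have "p * (1 - q / p) < p * ln (p / q)" unfolding e1 using s1 assms by (intro mult_strict_left_mono) auto
  moreover have "(1 - p) * (1 - (1 - q) / (1 - p)) \<le> (1 - p) * ln ((1 - p) / (1 - q))"
    unfolding e2 using s2 assms by (intro mult_left_mono) auto
  moreover have "p * (1 - q / p) + (1 - p) * (1 - (1 - q) / (1 - p)) = 0"
    using assms by (simp add: field_simps)
  ultimately show ?thesis unfolding kl_bern_def by linarith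
qed

lemma kl_cont:
  assumes "0 < a" "a < 1" "0 < t" "0 < t * y" "t * y < 1"
  shows "((\<lambda>x. kl_bern a (t * x)) \<longlongrightarrow> kl_bern a (t * y)) (at_right y)"
  unfolding kl_bern_def using assms
  by (intro tendsto_intros) auto


lemma mult_lt1: "0 \<le> (a::real) \<Longrightarrow> a \<le> 1 \<Longrightarrow> 0 \<le> b \<Longrightarrow> b < 1 \<Longrightarrow> a * b < 1"
proof -
  assume "0 \<le> a" "a \<le> 1" "0 \<le> b" "b < 1"
  then have "a * b \<le> 1 * b" by (intro mult_right_mono) auto
  thus ?thesis using \<open>b < 1\<close> by simp
qed

lemma eventually_shift: "eventually P sequentially \<Longrightarrow> eventually (\<lambda>n. P (n + m)) sequentially"
proof -
  assume "eventually P sequentially"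
  then obtain N where N: "\<forall>n\<ge>N. P n" unfolding eventually_sequentially by blast
  have "\<forall>n\<ge>N. P (n + m)" using N by simp
  thus ?thesis unfolding eventually_sequentially by blast
qed

lemma eventually_unshift: "eventually (\<lambda>n. P n) sequentially \<Longrightarrow> eventually (\<lambda>T. P (T - m)) sequentially"
proof -
  assume "eventually P sequentially"
  then obtain N where N: "\<forall>n\<ge>N. P n" unfolding eventually_sequentially by blast
  have "\<forall>T\<ge>N + m. P (T - m)" using N by simp
  thus ?thesis unfolding eventually_sequentially by blast
qed

lemma regret_nonneg:
  assumes vp: "valid_policy K \<pi>" and th: "\<forall>k\<in>{1..K}. 0 \<le> \<theta> k \<and> \<theta> k \<le> 1"
    and o: "opt_arm K \<theta> \<in> {1..K}" and opt: "\<forall>a\<in>{1..K}. \<theta> a \<le> \<theta> (opt_arm K \<theta>)"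
  shows "0 \<le> regret K m \<pi> \<theta> \<delta> T"
  unfolding regret_formula[OF vp th o]
  using gap_nonneg[OF th opt] by (intro sum_nonneg mult_nonneg_nonneg) (auto simp: tau_def)

locale thm_setup =
  fixes K m :: nat and \<delta> :: "nat pmf" and \<theta> :: "nat \<Rightarrow> real" and \<pi> :: policy
  assumes m1: "m \<ge> 1" and K1: "K \<ge> 1"
    and th01: "\<forall>k\<in>{1..K}. 0 < \<theta> k \<and> \<theta> k < 1"
    and best: "\<forall>k\<in>{2..K}. \<theta> k < \<theta> 1"
    and t: "tau \<delta> m > 0"
    and vp: "valid_policy K \<pi>"
    and ue: "uniformly_efficient K m \<delta> \<pi>"
begin

lemma th: "\<forall>k\<in>{1..K}. 0 \<le> \<theta> k \<and> \<theta> k \<le> 1" using th01 by auto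

lemma one_in: "1 \<in> {1..K}" using K1 by simp

lemma le1: "\<forall>a\<in>{1..K}. \<theta> a \<le> \<theta> 1"
proof
  fix a assume "a \<in> {1..K}"
  then have "a = 1 \<or> a \<in> {2..K}" by auto
  thus "\<theta> a \<le> \<theta> 1" using best by (auto simp: less_imp_le)
qed

lemma opt1: "opt_arm K \<theta> = 1"
  using one_in best by (intro opt_unique) auto

lemma t1: "tau \<delta> m \<le> 1" by (simp add: tau_def)

lemma RB3: "tau \<delta> m * (\<Sum>k\<in>{2..K}. (\<theta> 1 - \<theta> k) * (\<Sum>s<n. wk K m \<pi> \<theta> \<delta> k s)) \<le> regret K m \<pi> \<theta> \<delta> (n + m)"
proof -
  have "(\<Sum>s<n. gapE K m \<pi> \<theta> \<delta> 1 s) = (\<Sum>a\<in>{1..K}. (\<theta> 1 - \<theta> a) * (\<Sum>s<n. wk K m \<pi> \<theta> \<delta> a s))"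
    unfolding gapE_sum sum_distrib_left by (rule sum.swap)
  also have "\<dots> = (\<Sum>k\<in>{2..K}. (\<theta> 1 - \<theta> k) * (\<Sum>s<n. wk K m \<pi> \<theta> \<delta> k s))"
  proof -
    have "{1..K} = insert 1 {2..K}" using K1 by auto
    thus ?thesis by simp
  qed
  finally show ?thesis using regret_lower[OF vp th, of \<delta> m n] opt1 one_in le1 by simp
qed

lemma RB1:
  assumes k: "k \<in> {1..K}"
  shows "tau \<delta> m * ((\<theta> 1 - \<theta> k) * (\<Sum>s<n. wk K m \<pi> \<theta> \<delta> k s)) \<le> regret K m \<pi> \<theta> \<delta> (n + m)"
proof -
  have "(\<theta> 1 - \<theta> k) * (\<Sum>s<n. wk K m \<pi> \<theta> \<delta> k s) \<le> (\<Sum>s<n. gapE K m \<pi> \<theta> \<delta> 1 s)"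
    unfolding sum_distrib_left using gap_ge_arm[OF th le1 k] by (intro sum_mono) auto
  then have "tau \<delta> m * ((\<theta> 1 - \<theta> k) * (\<Sum>s<n. wk K m \<pi> \<theta> \<delta> k s)) \<le> tau \<delta> m * (\<Sum>s<n. gapE K m \<pi> \<theta> \<delta> 1 s)"
    using t by (intro mult_left_mono) auto
  also have "\<dots> \<le> regret K m \<pi> \<theta> \<delta> (n + m)"
    using regret_lower[OF vp th, of \<delta> m n] opt1 one_in le1 by simp
  finally show ?thesis .
qed

lemma ue': "\<forall>k\<in>{1..K}. 0 \<le> \<theta>' k \<and> \<theta>' k \<le> 1 \<Longrightarrow> 0 < \<alpha> \<Longrightarrow> \<alpha> < 1 \<Longrightarrow>
   (\<lambda>T. regret K m \<pi> \<theta>' \<delta> T / real T powr \<alpha>) \<longlonglongrightarrow> 0"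
  using ue unfolding uniformly_efficient_def by blast

lemma per_arm:
  assumes k: "k \<in> {2..K}" and c0: "0 \<le> c" and cd: "c * kl_bern (tau \<delta> m * \<theta> k) (tau \<delta> m * \<theta> 1) < 1"
  shows "eventually (\<lambda>n. c * ln (real n) \<le> (\<Sum>s<n. wk K m \<pi> \<theta> \<delta> k s)) sequentially"
proof -
  let ?\<tau> = "tau \<delta> m"
  have kK: "k \<in> {1..K}" using k by auto
  have k1: "k \<noteq> 1" using k by auto
  have thk: "0 < \<theta> k" "\<theta> k < 1" using th01 kK by auto
  have th1: "0 < \<theta> 1" "\<theta> 1 < 1" using th01 one_in by auto
  have gk: "\<theta> k < \<theta> 1" using best k by auto
  have ev1: "eventually (\<lambda>x. c * kl_bern (?\<tau> * \<theta> k) (?\<tau> * x) < 1) (at_right (\<theta> 1))"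
  proof -
    have "((\<lambda>x. kl_bern (?\<tau> * \<theta> k) (?\<tau> * x)) \<longlongrightarrow> kl_bern (?\<tau> * \<theta> k) (?\<tau> * \<theta> 1)) (at_right (\<theta> 1))"
    proof (rule kl_cont)
      show "0 < ?\<tau> * \<theta> k" using t thk by simp
      show "?\<tau> * \<theta> k < 1" using t t1 thk by (intro mult_lt1) auto
      show "0 < ?\<tau>" by (rule t)
      show "0 < ?\<tau> * \<theta> 1" using t th1 by simp
      show "?\<tau> * \<theta> 1 < 1" using t t1 th1 by (intro mult_lt1) auto
    qed
    then have "((\<lambda>x. c * kl_bern (?\<tau> * \<theta> k) (?\<tau> * x)) \<longlongrightarrow> c * kl_bern (?\<tau> * \<theta> k) (?\<tau> * \<theta> 1)) (at_right (\<theta> 1))"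
      by (intro tendsto_mult tendsto_const)
    thus ?thesis using cd by (rule order_tendstoD(2))
  qed
  have ev2: "eventually (\<lambda>x. \<theta> 1 < x \<and> x < 1) (at_right (\<theta> 1))"
    unfolding eventually_at_right_field using th1 by auto
  obtain x where x: "\<theta> 1 < x" "x < 1" and cdx: "c * kl_bern (?\<tau> * \<theta> k) (?\<tau> * x) < 1"
  proof -
    have "eventually (\<lambda>x. (\<theta> 1 < x \<and> x < 1) \<and> c * kl_bern (?\<tau> * \<theta> k) (?\<tau> * x) < 1) (at_right (\<theta> 1))"
      by (rule eventually_conj[OF ev2 ev1])
    then obtain y where "(\<theta> 1 < y \<and> y < 1) \<and> c * kl_bern (?\<tau> * \<theta> k) (?\<tau> * y) < 1"
      using eventually_happens[of _ "at_right (\<theta> 1)"] trivial_limit_at_right_real by blast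
    thus ?thesis using that by blast
  qed
  define \<theta>' where "\<theta>' = \<theta>(k := x)"
  have th'01: "\<forall>j\<in>{1..K}. 0 < \<theta>' j \<and> \<theta>' j < 1" unfolding \<theta>'_def using th01 x th1 by auto
  have th': "\<forall>j\<in>{1..K}. 0 \<le> \<theta>' j \<and> \<theta>' j \<le> 1" using th'01 by auto
  have same: "\<forall>a. a \<noteq> k \<longrightarrow> \<theta>' a = \<theta> a" unfolding \<theta>'_def by simp
  have thk': "\<theta>' k = x" unfolding \<theta>'_def by simp
  have optk: "opt_arm K \<theta>' = k"
  proof (rule opt_unique[OF kK], intro ballI impI)
    fix j assume "j \<in> {1..K}" "j \<noteq> k"
    then show "\<theta>' j < \<theta>' k" using le1 x same thk' by force
  qed
  have optle': "\<forall>a\<in>{1..K}. \<theta>' a \<le> \<theta>' (opt_arm K \<theta>')"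
  proof
    fix a assume a: "a \<in> {1..K}"
    show "\<theta>' a \<le> \<theta>' (opt_arm K \<theta>')"
    proof (cases "a = k")
      case False
      then have "\<theta>' a = \<theta> a" using same by simp
      also have "\<dots> \<le> \<theta> 1" using le1 a by simp
      also have "\<dots> \<le> \<theta>' (opt_arm K \<theta>')" unfolding optk thk' using x by simp
      finally show ?thesis .
    qed (simp add: optk)
  qed
  define d where "d = kl_bern (?\<tau> * \<theta> k) (?\<tau> * x)"
  have d0: "0 < d" unfolding d_def
  proof (rule kl_pos)
    show "0 < ?\<tau> * \<theta> k" using t thk by simp
    show "?\<tau> * \<theta> k < 1" using t t1 thk by (intro mult_lt1) auto
    show "0 < ?\<tau> * x" using t x th1 by simp
    show "?\<tau> * x < 1" using t t1 x th1 by (intro mult_lt1) auto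
    show "?\<tau> * \<theta> k \<noteq> ?\<tau> * x" using t gk x by simp
  qed
  define W where "W n = (\<Sum>s<n. wk K m \<pi> \<theta> \<delta> k s)" for n
  define W' where "W' n = (\<Sum>s<n. wk K m \<pi> \<theta>' \<delta> k s)" for n
  have W0: "0 \<le> W n" for n unfolding W_def using wk_bounds(1)[OF vp th] by (intro sum_nonneg) auto
  have W'le: "W' n \<le> real n" for n
  proof -
    have "W' n \<le> (\<Sum>s<n. 1)" unfolding W'_def using wk_bounds(2)[OF vp th'] by (intro sum_mono) auto
    thus ?thesis by simp
  qed
  have H1: "(1 - W n / (real n + 1)) * ln (1 / (1 - W' n / (real n + 1))) - 2 \<le> W n * d" for n
    using KL_lower[OF vp th th'01 kK same t thk(1), of n] unfolding W_def W'_def d_def thk'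
    by (simp add: add.commute)
  define g where "g = \<theta> 1 - \<theta> k"
  have g0: "0 < g" unfolding g_def using gk by simp
  have H2: "(\<lambda>n. W n / (real n + 1)) \<longlonglongrightarrow> 0"
  proof -
    have lim: "(\<lambda>T. regret K m \<pi> \<theta> \<delta> T / real T powr (1/2)) \<longlonglongrightarrow> 0"
      using ue'[OF th] by simp
    have lim2: "(\<lambda>n. regret K m \<pi> \<theta> \<delta> (n + m) / real (n + m) powr (1/2)) \<longlonglongrightarrow> 0"
      using LIMSEQ_ignore_initial_segment[OF lim, of m] by simp
    have lim3: "(\<lambda>n. (real m / (?\<tau> * g)) * (regret K m \<pi> \<theta> \<delta> (n + m) / real (n + m) powr (1/2))) \<longlonglongrightarrow> 0"
      using tendsto_mult[OF tendsto_const lim2, of "real m / (?\<tau> * g)"] by simp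
    show ?thesis
    proof (rule tendsto_sandwich[OF _ _ tendsto_const lim3])
      show "eventually (\<lambda>n. 0 \<le> W n / (real n + 1)) sequentially" using W0 by simp
      show "eventually (\<lambda>n. W n / (real n + 1) \<le> (real m / (?\<tau> * g)) * (regret K m \<pi> \<theta> \<delta> (n + m) / real (n + m) powr (1/2))) sequentially"
      proof (intro always_eventually allI)
        fix n
        let ?r = "regret K m \<pi> \<theta> \<delta> (n + m)"
        let ?P = "real (n + m) powr (1/2)"
        have r0: "0 \<le> ?r" using regret_nonneg[OF vp th] opt1 one_in le1 by simp
        have P0: "0 < ?P" using m1 by simp
        have P1: "?P \<le> real m * (real n + 1)"
        proof -
          have "?P \<le> real (n + m) powr 1" using m1 by (intro powr_mono) auto
          also have "\<dots> = real (n + m)" using m1 by simp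
          also have "\<dots> \<le> real m * (real n + 1)"
          proof -
            have "real n * 1 \<le> real n * real m" using m1 by (intro mult_left_mono) auto
            thus ?thesis by (simp add: algebra_simps)
          qed
          finally show ?thesis .
        qed
        have "?\<tau> * (g * W n) \<le> ?r" using RB1[OF kK, of n] unfolding W_def g_def .
        then have Wr: "W n \<le> ?r / (?\<tau> * g)" using t g0 by (simp add: field_simps)
        have "W n / (real n + 1) \<le> (?r / (?\<tau> * g)) / (real n + 1)"
          using Wr by (intro divide_right_mono) auto
        also have "\<dots> = (real m / (?\<tau> * g)) * (?r / (real m * (real n + 1)))"
        proof -
          have mpos: "0 < real m" using m1 by simp
          have "(real m / (?\<tau> * g)) * (?r / (real m * (real n + 1))) = (real m * ?r) / (real m * ((?\<tau> * g) * (real n + 1)))"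
            by (simp add: ac_simps)
          also have "\<dots> = ?r / ((?\<tau> * g) * (real n + 1))" using mpos by (rule_tac mult_divide_mult_cancel_left) simp
          finally show ?thesis by (simp add: divide_divide_eq_left)
        qed
        also have "\<dots> \<le> (real m / (?\<tau> * g)) * (?r / ?P)"
        proof (rule mult_left_mono)
          have "0 < real m * (real n + 1) * ?P" using P0 m1 by (intro mult_pos_pos) auto
          then show "?r / (real m * (real n + 1)) \<le> ?r / ?P" by (rule divide_left_mono[OF P1 r0])
          show "0 \<le> real m / (?\<tau> * g)" using t g0 by simp
        qed
        finally show "W n / (real n + 1) \<le> (real m / (?\<tau> * g)) * (?r / ?P)" .
      qed
    qed
  qed
  define \<Delta> where "\<Delta> = x - \<theta> 1"
  have D0: "0 < \<Delta>" unfolding \<Delta>_def using x by simp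
  have H3: "eventually (\<lambda>n. real n - W' n \<le> (1 / (?\<tau> * \<Delta>)) * real (n + m) powr \<alpha>) sequentially"
    if a: "0 < \<alpha>" "\<alpha> < 1" for \<alpha>
  proof -
    have lim: "(\<lambda>T. regret K m \<pi> \<theta>' \<delta> T / real T powr \<alpha>) \<longlonglongrightarrow> 0" using ue'[OF th' a] .
    have "eventually (\<lambda>T. regret K m \<pi> \<theta>' \<delta> T / real T powr \<alpha> < 1) sequentially"
      using order_tendstoD(2)[OF lim zero_less_one] .
    then have ev: "eventually (\<lambda>n. regret K m \<pi> \<theta>' \<delta> (n + m) / real (n + m) powr \<alpha> < 1) sequentially"
      by (rule eventually_shift)
    show ?thesis using ev
    proof (rule eventually_mono)
      fix n assume lt: "regret K m \<pi> \<theta>' \<delta> (n + m) / real (n + m) powr \<alpha> < 1"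
      have P0: "0 < real (n + m) powr \<alpha>" using m1 by simp
      have r: "regret K m \<pi> \<theta>' \<delta> (n + m) < real (n + m) powr \<alpha>" using lt P0 by (simp add: divide_less_eq)
      have gap: "\<forall>a\<in>{1..K}. a \<noteq> k \<longrightarrow> \<Delta> \<le> \<theta>' k - \<theta>' a"
        unfolding \<Delta>_def using le1 same thk' by force
      have "\<Delta> * (real n - W' n) = (\<Sum>s<n. \<Delta> * (1 - wk K m \<pi> \<theta>' \<delta> k s))"
        unfolding W'_def by (simp add: sum_subtractf right_diff_distrib sum_distrib_left)
      also have "\<dots> \<le> (\<Sum>s<n. gapE K m \<pi> \<theta>' \<delta> k s)"
        using gap_ge_other[OF vp th' kK gap] D0 by (intro sum_mono) auto
      finally have "?\<tau> * (\<Delta> * (real n - W' n)) \<le> ?\<tau> * (\<Sum>s<n. gapE K m \<pi> \<theta>' \<delta> k s)"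
        using t by (intro mult_left_mono) auto
      also have "\<dots> \<le> regret K m \<pi> \<theta>' \<delta> (n + m)"
        using regret_lower[OF vp th', of \<delta> m n] optk kK optle' by simp
      finally have "?\<tau> * \<Delta> * (real n - W' n) \<le> real (n + m) powr \<alpha>" using r by (simp add: mult.assoc)
      thus "real n - W' n \<le> (1 / (?\<tau> * \<Delta>)) * real (n + m) powr \<alpha>"
        using t D0 by (simp add: field_simps)
    qed
  qed
  have "eventually (\<lambda>n. c * ln (real n) \<le> W n) sequentially"
  proof (rule core[OF d0 c0 _ _ m1 H1 H2 H3 W'le W0])
    show "c * d < 1" using cdx unfolding d_def .
    show "0 < 1 / (?\<tau> * \<Delta>)" using t D0 by simp
  qed
  thus ?thesis unfolding W_def .
qed


definition Sbound where
  "Sbound = (\<Sum>k\<in>{2..K}. tau \<delta> m * (\<theta> 1 - \<theta> k) / kl_bern (tau \<delta> m * \<theta> k) (tau \<delta> m * \<theta> 1))"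

lemma dk_pos: "k \<in> {2..K} \<Longrightarrow> 0 < kl_bern (tau \<delta> m * \<theta> k) (tau \<delta> m * \<theta> 1)"
proof -
  assume k: "k \<in> {2..K}"
  have kK: "k \<in> {1..K}" using k by auto
  have thk: "0 < \<theta> k" "\<theta> k < 1" using th01 kK by auto
  have th1: "0 < \<theta> 1" "\<theta> 1 < 1" using th01 one_in by auto
  have gk: "\<theta> k < \<theta> 1" using best k by auto
  show ?thesis
  proof (rule kl_pos)
    show "0 < tau \<delta> m * \<theta> k" using t thk by simp
    show "tau \<delta> m * \<theta> k < 1" using t t1 thk by (intro mult_lt1) auto
    show "0 < tau \<delta> m * \<theta> 1" using t th1 by simp
    show "tau \<delta> m * \<theta> 1 < 1" using t t1 th1 by (intro mult_lt1) auto
    show "tau \<delta> m * \<theta> k \<noteq> tau \<delta> m * \<theta> 1" using t gk by simp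
  qed
qed

lemma S0: "0 \<le> Sbound"
  unfolding Sbound_def using dk_pos t le1
  by (intro sum_nonneg divide_nonneg_pos mult_nonneg_nonneg) (auto simp: less_imp_le)

lemma main_real:
  assumes r: "r < Sbound"
  shows "eventually (\<lambda>T. r < regret K m \<pi> \<theta> \<delta> T / ln (real T)) sequentially"
proof -
  let ?\<tau> = "tau \<delta> m"
  let ?S = "Sbound"
  let ?d = "\<lambda>k. kl_bern (?\<tau> * \<theta> k) (?\<tau> * \<theta> 1)"
  define \<eta> where "\<eta> = min (1/2) ((?S - r) / (2 * (?S + 1)))"
  have S0': "0 \<le> ?S" by (rule S0)
  have e0: "0 < \<eta>" unfolding \<eta>_def using r S0' by simp
  have e1: "\<eta> \<le> 1/2" unfolding \<eta>_def by (rule min.cobounded1)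
  have key: "r < (1 - \<eta>) * (1 - \<eta>) * ?S"
  proof -
    have "\<eta> \<le> (?S - r) / (2 * (?S + 1))" unfolding \<eta>_def by (rule min.cobounded2)
    then have "2 * \<eta> \<le> (?S - r) / (?S + 1)" using S0' by (simp add: field_simps)
    then have "2 * \<eta> * ?S \<le> (?S - r) / (?S + 1) * ?S" using S0' by (intro mult_right_mono) auto
    also have "\<dots> < ?S - r"
    proof (cases "?S = 0")
      case True thus ?thesis using r by simp
    next
      case False
      then have "0 < ?S" using S0' by simp
      then have "?S / (?S + 1) < 1" by simp
      then have "(?S - r) * (?S / (?S + 1)) < (?S - r) * 1" using r by (intro mult_strict_left_mono) auto
      thus ?thesis by (simp add: field_simps)
    qed
    finally have "r < (1 - 2 * \<eta>) * ?S" by (simp add: algebra_simps)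
    also have "\<dots> \<le> (1 - \<eta>) * (1 - \<eta>) * ?S"
    proof (rule mult_right_mono[OF _ S0'])
      have "0 \<le> \<eta> * \<eta>" by simp
      thus "1 - 2 * \<eta> \<le> (1 - \<eta>) * (1 - \<eta>)" by (simp add: algebra_simps)
    qed
    finally show ?thesis .
  qed
  have perk: "eventually (\<lambda>n. \<forall>k\<in>{2..K}. ((1 - \<eta>) / ?d k) * ln (real n) \<le> (\<Sum>s<n. wk K m \<pi> \<theta> \<delta> k s)) sequentially"
  proof (rule eventually_ball_finite)
    show "finite {2..K}" by simp
    show "\<forall>k\<in>{2..K}. eventually (\<lambda>n. ((1 - \<eta>) / ?d k) * ln (real n) \<le> (\<Sum>s<n. wk K m \<pi> \<theta> \<delta> k s)) sequentially"
    proof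
      fix k assume k: "k \<in> {2..K}"
      have dk: "0 < ?d k" using dk_pos[OF k] .
      show "eventually (\<lambda>n. ((1 - \<eta>) / ?d k) * ln (real n) \<le> (\<Sum>s<n. wk K m \<pi> \<theta> \<delta> k s)) sequentially"
      proof (rule per_arm[OF k])
        have "0 \<le> 1 - \<eta>" using e1 by linarith
        thus "0 \<le> (1 - \<eta>) / ?d k" using dk by simp
        show "(1 - \<eta>) / ?d k * ?d k < 1" using dk e0 by simp
      qed
    qed
  qed
  have evn: "eventually (\<lambda>n. (1 - \<eta>) * ?S * ln (real n) \<le> regret K m \<pi> \<theta> \<delta> (n + m)) sequentially"
    using perk
  proof (rule eventually_mono)
    fix n assume H: "\<forall>k\<in>{2..K}. ((1 - \<eta>) / ?d k) * ln (real n) \<le> (\<Sum>s<n. wk K m \<pi> \<theta> \<delta> k s)"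
    have "(1 - \<eta>) * ?S * ln (real n) = ?\<tau> * (\<Sum>k\<in>{2..K}. (\<theta> 1 - \<theta> k) * (((1 - \<eta>) / ?d k) * ln (real n)))"
      unfolding Sbound_def by (simp add: sum_distrib_left sum_distrib_right algebra_simps)
    also have "\<dots> \<le> ?\<tau> * (\<Sum>k\<in>{2..K}. (\<theta> 1 - \<theta> k) * (\<Sum>s<n. wk K m \<pi> \<theta> \<delta> k s))"
    proof (rule mult_left_mono)
      show "0 \<le> ?\<tau>" using t by simp
      show "(\<Sum>k\<in>{2..K}. (\<theta> 1 - \<theta> k) * (((1 - \<eta>) / ?d k) * ln (real n))) \<le> (\<Sum>k\<in>{2..K}. (\<theta> 1 - \<theta> k) * (\<Sum>s<n. wk K m \<pi> \<theta> \<delta> k s))"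
      proof (rule sum_mono)
        fix k assume k: "k \<in> {2..K}"
        have "0 \<le> \<theta> 1 - \<theta> k" using best k by (simp add: less_imp_le)
        thus "(\<theta> 1 - \<theta> k) * (((1 - \<eta>) / ?d k) * ln (real n)) \<le> (\<theta> 1 - \<theta> k) * (\<Sum>s<n. wk K m \<pi> \<theta> \<delta> k s)"
          using H k by (intro mult_left_mono) auto
      qed
    qed
    also have "\<dots> \<le> regret K m \<pi> \<theta> \<delta> (n + m)" by (rule RB3)
    finally show "(1 - \<eta>) * ?S * ln (real n) \<le> regret K m \<pi> \<theta> \<delta> (n + m)" .
  qed
  have evT: "eventually (\<lambda>T. (1 - \<eta>) * ?S * ln (real (T - m)) \<le> regret K m \<pi> \<theta> \<delta> (T - m + m)) sequentially"
    using eventually_unshift[OF evn] .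
  show ?thesis
    using evT eventually_ln_ge[of "ln 2 / \<eta>"] eventually_ge_at_top[of "2 * m + 1"]
  proof (eventually_elim)
    case (elim T)
    have Tm: "T - m + m = T" using elim by simp
    have lnT: "ln 2 / \<eta> \<le> ln (real T)" using elim by simp
    have lnT0: "0 < ln (real T)"
    proof -
      have "0 < ln 2 / \<eta>" using e0 by simp
      thus ?thesis using lnT by linarith
    qed
    have half: "real T / 2 \<le> real (T - m)" using elim by auto
    have T0: "0 < real T" using elim by simp
    have "ln (real T) - ln 2 \<le> ln (real (T - m))"
    proof -
      have "ln (real T / 2) \<le> ln (real (T - m))" using half T0 by (subst ln_le_cancel_iff) auto
      thus ?thesis using T0 by (simp add: ln_div)
    qed
    moreover have "ln 2 \<le> \<eta> * ln (real T)" using lnT e0 by (simp add: field_simps)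
    ultimately have lnTm: "(1 - \<eta>) * ln (real T) \<le> ln (real (T - m))" by (simp add: algebra_simps)
    have "(1 - \<eta>) * (1 - \<eta>) * ?S * ln (real T) = (1 - \<eta>) * ?S * ((1 - \<eta>) * ln (real T))" by simp
    also have "\<dots> \<le> (1 - \<eta>) * ?S * ln (real (T - m))"
      using lnTm e1 S0' by (intro mult_left_mono mult_nonneg_nonneg) auto
    also have "\<dots> \<le> regret K m \<pi> \<theta> \<delta> T" using elim Tm by simp
    finally have "(1 - \<eta>) * (1 - \<eta>) * ?S * ln (real T) \<le> regret K m \<pi> \<theta> \<delta> T" .
    then have "(1 - \<eta>) * (1 - \<eta>) * ?S \<le> regret K m \<pi> \<theta> \<delta> T / ln (real T)"
      using lnT0 by (simp add: le_divide_eq)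
    thus ?case using key by simp
  qed
qed

lemma main:
  "Liminf sequentially (\<lambda>T. ereal (regret K m \<pi> \<theta> \<delta> T / ln (real T))) \<ge> ereal Sbound"
proof (subst le_Liminf_iff, intro allI impI)
  fix y :: ereal assume y: "y < ereal Sbound"
  show "eventually (\<lambda>T. y < ereal (regret K m \<pi> \<theta> \<delta> T / ln (real T))) sequentially"
  proof (cases y)
    case (real r)
    then have "r < Sbound" using y by simp
    then show ?thesis using main_real real by (auto elim!: eventually_mono)
  next
    case PInf thus ?thesis using y by simp
  next
    case MInf thus ?thesis by simp
  qed
qed

end


theorem theorem3:
  fixes K m :: nat and \<delta> :: "nat pmf" and \<theta> :: "nat \<Rightarrow> real" and \<pi> :: policy
  assumes "m \<ge> 1" and "K \<ge> 1"
    and "\<forall>k\<in>{1..K}. 0 < \<theta> k \<and> \<theta> k < 1"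
    and "\<forall>k\<in>{2..K}. \<theta> k < \<theta> 1"
    and "tau \<delta> m > 0"
    and "valid_policy K \<pi>"
    and "uniformly_efficient K m \<delta> \<pi>"
  shows "Liminf sequentially (\<lambda>T. ereal (regret K m \<pi> \<theta> \<delta> T / ln (real T)))
           \<ge> ereal (\<Sum>k\<in>{2..K}. tau \<delta> m * (\<theta> 1 - \<theta> k)
                                 / kl_bern (tau \<delta> m * \<theta> k) (tau \<delta> m * \<theta> 1))"
proof -
  interpret thm_setup K m \<delta> \<theta> \<pi> using assms by unfold_locales
  show ?thesis using main unfolding Sbound_def .
qed

end
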